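(* Let $T$ be a supercritical Galton–Watson tree with finite alphabet $\mathbb{A}$, weights $\{r_i\}_{i\in\mathbb{A}}\subset(0,1)$ and offspring distribution $W$, and let $\delta$ satisfy $\mathbb{E}\big(\sum_{i\in W}r_i^\delta\big)=1$. Then for every $\alpha<\delta$ and every $\varepsilon>0$ there exists $\rho_0>0$ such that for all $\rho<\rho_0$, $\mathbb{P}\big(|T_{\Pi_\rho}|>\rho^{-\alpha}\ \big|\ \text{nonextinction}\big)>1-\varepsilon$.
   Context: For $i=i_1\dots i_n\in\mathbb{A}^*$, $r_i=r_{i_1}\cdots r_{i_n}$; $r_{\min}=\min_ir_i$; for $\rho\in(0,r_{\min})$, $\Pi_\rho=\{i\in\mathbb{A}^*: r_i\le\rho<r_{i_1}\cdots r_{i_{|i|-1}}\}$ and $T_{\Pi_\rho}=T\cap\Pi_\rho$. The Galton–Watson tree with offspring distribution $W$ (random subset of $\mathbb{A}$, $\mathbb{P}(i\in W)>0$ for all $i$) is $T_0=\{\emptyset\}$, $T_n=\{aj:a\in T_{n-1},j\in W_a\}$ with independent copies $W_a$; supercritical means $\mathbb{E}|W|>1$; nonextinction means all $T_n\ne\emptyset$. *)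

theory Defs
  imports "HOL-Probability.Probability"
begin

definition word_weight :: "('a \<Rightarrow> real) \<Rightarrow> 'a list \<Rightarrow> real" where
  "word_weight r i = (\<Prod>k<length i. r (i ! k))"

definition cut_set :: "('a \<Rightarrow> real) \<Rightarrow> real \<Rightarrow> 'a list set" where
  "cut_set r \<rho> = {i. i \<noteq> [] \<and> word_weight r i \<le> \<rho> \<and> \<rho> < word_weight r (butlast i)}"

text \<open>Sample space of the Galton-Watson tree: independent copies W_a of W, one for each word a.\<close>
definition gw_space :: "'a set pmf \<Rightarrow> ('a list \<Rightarrow> 'a set) measure" where
  "gw_space W = PiM UNIV (\<lambda>_. measure_pmf W)"

fun gw_gen :: "('a list \<Rightarrow> 'a set) \<Rightarrow> nat \<Rightarrow> 'a list set" where
  "gw_gen \<omega> 0 = {[]}"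
| "gw_gen \<omega> (Suc n) = {a @ [j] | a j. a \<in> gw_gen \<omega> n \<and> j \<in> \<omega> a}"

definition gw_tree :: "('a list \<Rightarrow> 'a set) \<Rightarrow> 'a list set" where
  "gw_tree \<omega> = (\<Union>n. gw_gen \<omega> n)"

definition nonextinct :: "('a list \<Rightarrow> 'a set) \<Rightarrow> bool" where
  "nonextinct \<omega> \<longleftrightarrow> (\<forall>n. gw_gen \<omega> n \<noteq> {})"

end

theory Submission
  imports Defs "HOL-Probability.Probability"
begin


definition intree :: "('a list \<Rightarrow> 'a set) \<Rightarrow> 'a list \<Rightarrow> bool" where
  "intree \<omega> x \<longleftrightarrow> (\<forall>k<length x. x ! k \<in> \<omega> (take k x))"

definition shift :: "'a \<Rightarrow> ('a list \<Rightarrow> 'a set) \<Rightarrow> ('a list \<Rightarrow> 'a set)" where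
  "shift j \<omega> = (\<lambda>b. \<omega> (j # b))"

lemma intree_snoc: "intree \<omega> (a @ [j]) \<longleftrightarrow> intree \<omega> a \<and> j \<in> \<omega> a"
  unfolding intree_def
  by (auto simp: nth_append less_Suc_eq)

lemma intree_Nil[simp]: "intree \<omega> []" by (simp add: intree_def)

lemma intree_Cons: "intree \<omega> (j # b) \<longleftrightarrow> j \<in> \<omega> [] \<and> intree (shift j \<omega>) b"
  unfolding intree_def shift_def
  by (simp add: All_less_Suc2)

lemma gen_char: "x \<in> gw_gen \<omega> n \<longleftrightarrow> length x = n \<and> intree \<omega> x"
proof (induction n arbitrary: x)
  case 0 then show ?case by auto
next
  case (Suc n)
  show ?case
  proof
    assume "x \<in> gw_gen \<omega> (Suc n)"
    then obtain a j where x: "x = a @ [j]" "a \<in> gw_gen \<omega> n" "j \<in> \<omega> a" by auto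
    then have "length a = n \<and> intree \<omega> a" using Suc.IH by blast
    then show "length x = Suc n \<and> intree \<omega> x" using x by (simp add: intree_snoc)
  next
    assume a: "length x = Suc n \<and> intree \<omega> x"
    then obtain y j where x: "x = y @ [j]" by (metis length_Suc_conv_rev)
    then have "length y = n" "intree \<omega> y" "j \<in> \<omega> y" using a by (auto simp: intree_snoc)
    then have "y \<in> gw_gen \<omega> n" using Suc.IH by blast
    then show "x \<in> gw_gen \<omega> (Suc n)" using x \<open>j \<in> \<omega> y\<close> by auto
  qed
qed

lemma tree_char: "x \<in> gw_tree \<omega> \<longleftrightarrow> intree \<omega> x"
  unfolding gw_tree_def using gen_char by blast

lemma gen_Suc_empty: "gw_gen \<omega> (Suc n) = {} \<longleftrightarrow> (\<forall>j\<in>\<omega> []. gw_gen (shift j \<omega>) n = {})"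
proof -
  have "gw_gen \<omega> (Suc n) \<noteq> {} \<longleftrightarrow> (\<exists>j\<in>\<omega> []. gw_gen (shift j \<omega>) n \<noteq> {})"
  proof
    assume "gw_gen \<omega> (Suc n) \<noteq> {}"
    then obtain x where "x \<in> gw_gen \<omega> (Suc n)" by blast
    then have x: "length x = Suc n" "intree \<omega> x" using gen_char by blast+
    then obtain j b where "x = j # b" "length b = n"
      by (metis length_Suc_conv)
    with x have "x = j # b" "length b = n" "intree \<omega> (j # b)" by auto
    then have "j \<in> \<omega> []" "intree (shift j \<omega>) b" by (simp_all add: intree_Cons)
    then have "j \<in> \<omega> []" "b \<in> gw_gen (shift j \<omega>) n" using \<open>length b = n\<close> by (simp_all add: gen_char)
    then show "\<exists>j\<in>\<omega> []. gw_gen (shift j \<omega>) n \<noteq> {}" by blast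
  next
    assume "\<exists>j\<in>\<omega> []. gw_gen (shift j \<omega>) n \<noteq> {}"
    then obtain j b where "j \<in> \<omega> []" "b \<in> gw_gen (shift j \<omega>) n" by blast
    then have "length (j # b) = Suc n \<and> intree \<omega> (j # b)" by (simp add: gen_char intree_Cons)
    then have "j # b \<in> gw_gen \<omega> (Suc n)" by (rule gen_char[THEN iffD2])
    then show "gw_gen \<omega> (Suc n) \<noteq> {}" by blast
  qed
  then show ?thesis by blast
qed

lemma gen_0_ne[simp]: "gw_gen \<omega> 0 \<noteq> {}" by simp

lemma gen_empty_mono: "gw_gen \<omega> n = {} \<Longrightarrow> n \<le> m \<Longrightarrow> gw_gen \<omega> m = {}"
proof (induction m)
  case 0 then show ?case by simp
next
  case (Suc m)
  then show ?case
    by (cases "n = Suc m") auto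
qed

lemma word_weight_Nil[simp]: "word_weight r [] = 1"
  by (simp add: word_weight_def)

lemma word_weight_Cons: "word_weight r (j # b) = r j * word_weight r b"
  unfolding word_weight_def length_Cons prod.lessThan_Suc_shift by simp

lemma word_weight_bounds:
  assumes "\<And>i. 0 < r i \<and> r i < 1"
  shows "0 < word_weight r x \<and> word_weight r x \<le> 1"
proof (induction x)
  case Nil then show ?case by simp
next
  case (Cons a x)
  then show ?case using assms[of a]
    by (auto simp: word_weight_Cons mult_le_one)
qed

definition Cset :: "('a \<Rightarrow> real) \<Rightarrow> real \<Rightarrow> 'a list set" where
  "Cset r \<sigma> = (if 1 \<le> \<sigma> then {[]} else cut_set r \<sigma>)"

lemma Cset_rec:
  assumes r: "\<And>i. 0 < r i \<and> r i < 1" and s: "0 < \<sigma>" "\<sigma> < 1"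
  shows "Cset r \<sigma> = (\<Union>j. (Cons j) ` Cset r (\<sigma> / r j))"
proof (rule set_eqI)
  fix x
  show "x \<in> Cset r \<sigma> \<longleftrightarrow> x \<in> (\<Union>j. (Cons j) ` Cset r (\<sigma> / r j))"
  proof (cases x)
    case Nil then show ?thesis using s by (auto simp: Cset_def cut_set_def)
  next
    case (Cons j b)
    have rj: "0 < r j" "r j < 1" using r[of j] by auto
    have wb: "0 < word_weight r b" "word_weight r b \<le> 1" using word_weight_bounds[of r, OF r] by blast+
    have wbb: "0 < word_weight r (butlast b)" "word_weight r (butlast b) \<le> 1" using word_weight_bounds[of r, OF r] by blast+
    have xC: "x \<in> Cset r \<sigma> \<longleftrightarrow> x \<in> cut_set r \<sigma>" using s by (simp add: Cset_def)
    have e1: "1 \<le> \<sigma> / r j \<longleftrightarrow> r j \<le> \<sigma>" using rj by (simp add: le_divide_eq)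
    have "x \<in> Cset r \<sigma> \<longleftrightarrow> b \<in> Cset r (\<sigma> / r j)"
    proof (cases "b = []")
      case True
      have "x \<in> cut_set r \<sigma> \<longleftrightarrow> r j \<le> \<sigma>" using s Cons True by (simp add: cut_set_def word_weight_Cons)
      moreover have "b \<in> Cset r (\<sigma> / r j) \<longleftrightarrow> r j \<le> \<sigma>" using True e1 by (simp add: Cset_def cut_set_def)
      ultimately show ?thesis using xC by simp
    next
      case False
      have bl: "butlast (j # b) = j # butlast b" using False by simp
      have xc: "x \<in> cut_set r \<sigma> \<longleftrightarrow> r j * word_weight r b \<le> \<sigma> \<and> \<sigma> < r j * word_weight r (butlast b)"
        using Cons False bl by (simp add: cut_set_def word_weight_Cons)
      show ?thesis
      proof (cases "1 \<le> \<sigma> / r j")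
        case True
        then have "r j \<le> \<sigma>" using e1 by simp
        moreover have "r j * word_weight r (butlast b) \<le> r j" using rj wbb by (simp add: mult_le_one)
        ultimately have "x \<notin> cut_set r \<sigma>" using xc by linarith
        moreover have "b \<notin> Cset r (\<sigma> / r j)" using True False by (simp add: Cset_def)
        ultimately show ?thesis using xC by simp
      next
        case nT: False
        have "b \<in> Cset r (\<sigma> / r j) \<longleftrightarrow> word_weight r b \<le> \<sigma> / r j \<and> \<sigma> / r j < word_weight r (butlast b)"
          using nT False by (simp add: Cset_def cut_set_def)
        also have "\<dots> \<longleftrightarrow> r j * word_weight r b \<le> \<sigma> \<and> \<sigma> < r j * word_weight r (butlast b)"
          using rj by (simp add: le_divide_eq divide_less_eq mult.commute)
        finally show ?thesis using xC xc by simp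
      qed
    qed
    then show ?thesis using Cons by auto
  qed
qed




definition Qm :: "'a set pmf \<Rightarrow> ('a \<Rightarrow> 'a list \<Rightarrow> 'a set) measure" where
  "Qm W = PiM UNIV (\<lambda>_. gw_space W)"

definition Bm :: "'a set pmf \<Rightarrow> ('a set \<times> ('a \<Rightarrow> 'a list \<Rightarrow> 'a set)) measure" where
  "Bm W = measure_pmf W \<Otimes>\<^sub>M Qm W"

definition Psi :: "'a set \<times> ('a \<Rightarrow> 'a list \<Rightarrow> 'a set) \<Rightarrow> ('a list \<Rightarrow> 'a set)" where
  "Psi x = (\<lambda>i. case i of [] \<Rightarrow> fst x | j # b \<Rightarrow> snd x j b)"

definition Phi :: "('a list \<Rightarrow> 'a set) \<Rightarrow> 'a set \<times> ('a \<Rightarrow> 'a list \<Rightarrow> 'a set)" where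
  "Phi \<omega> = (\<omega> [], \<lambda>j. shift j \<omega>)"

lemma space_gw[simp]: "space (gw_space W) = UNIV"
  by (simp add: gw_space_def space_PiM PiE_UNIV_domain)

lemma prob_space_gw: "prob_space (gw_space W)"
  unfolding gw_space_def by (rule prob_space_PiM) (simp add: prob_space_measure_pmf)

lemma emeasure_gw_UNIV[simp]: "emeasure (gw_space W) UNIV = 1"
  using prob_space.emeasure_space_1[OF prob_space_gw, of W] by simp

lemma space_Qm[simp]: "space (Qm W) = UNIV"
  by (simp add: Qm_def space_PiM PiE_UNIV_domain)

lemma prob_space_Qm: "prob_space (Qm W)"
  unfolding Qm_def by (rule prob_space_PiM) (simp add: prob_space_gw)

lemma space_Bm[simp]: "space (Bm W) = UNIV"
  by (simp add: Bm_def space_pair_measure)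

lemma meas_comp_gw: "(\<lambda>\<omega>. \<omega> i) \<in> measurable (gw_space W) (measure_pmf W)"
  unfolding gw_space_def by (rule measurable_component_singleton) simp

lemma meas_comp_Qm: "(\<lambda>\<omega>. \<omega> j) \<in> measurable (Qm W) (gw_space W)"
  unfolding Qm_def by (rule measurable_component_singleton) simp

lemma meas_fst_Bm: "(\<lambda>x. f (fst x)) \<in> measurable (Bm W) N" if "f \<in> UNIV \<rightarrow> space N"
proof -
  have "f \<in> measurable (measure_pmf W) N" using that by simp
  then show ?thesis unfolding Bm_def by (rule measurable_compose[OF measurable_fst])
qed

lemma meas_snd_Bm: "(\<lambda>x. snd x j) \<in> measurable (Bm W) (gw_space W)"
  unfolding Bm_def by (rule measurable_compose[OF measurable_snd meas_comp_Qm])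

lemma meas_into_gw:
  assumes "\<And>i. (\<lambda>x. f x i) \<in> measurable N (measure_pmf W)"
  shows "f \<in> measurable N (gw_space W)"
proof -
  have "(\<lambda>x i. f x i) \<in> measurable N (PiM UNIV (\<lambda>_. measure_pmf W))"
    by (rule measurable_PiM_single') (use assms in auto)
  then show ?thesis unfolding gw_space_def by simp
qed

lemma meas_into_Qm:
  assumes "\<And>i. (\<lambda>x. f x i) \<in> measurable N (gw_space W)"
  shows "f \<in> measurable N (Qm W)"
proof -
  have "(\<lambda>x i. f x i) \<in> measurable N (PiM UNIV (\<lambda>_. gw_space W))"
    by (rule measurable_PiM_single') (use assms in auto)
  then show ?thesis unfolding Qm_def by simp
qed

lemma measurable_Psi: "Psi \<in> measurable (Bm W) (gw_space W)"
proof (rule meas_into_gw)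
  fix i :: "'a list"
  show "(\<lambda>x. Psi x i) \<in> measurable (Bm W) (measure_pmf W)"
  proof (cases i)
    case Nil
    then show ?thesis using meas_fst_Bm[of "\<lambda>x. x" "measure_pmf W" W] by (simp add: Psi_def)
  next
    case (Cons j b)
    have "(\<lambda>x. snd x j b) \<in> measurable (Bm W) (measure_pmf W)"
      by (rule measurable_compose[OF meas_snd_Bm meas_comp_gw])
    then show ?thesis using Cons by (simp add: Psi_def)
  qed
qed

lemma measurable_shift: "shift j \<in> measurable (gw_space W) (gw_space W)"
proof (rule meas_into_gw)
  fix i show "(\<lambda>x. shift j x i) \<in> measurable (gw_space W) (measure_pmf W)"
    unfolding shift_def by (rule meas_comp_gw)
qed

lemma measurable_Phi: "Phi \<in> measurable (gw_space W) (Bm W)"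
proof -
  have 1: "(\<lambda>\<omega>. \<omega> []) \<in> measurable (gw_space W) (measure_pmf W)" by (rule meas_comp_gw)
  have 2: "(\<lambda>\<omega>. \<lambda>j. shift j \<omega>) \<in> measurable (gw_space W) (Qm W)"
    by (rule meas_into_Qm) (simp add: measurable_shift)
  show ?thesis unfolding Phi_def Bm_def using 1 2 by (rule measurable_Pair)
qed

lemma Phi_Psi: "Phi (Psi x) = x"
  by (cases x) (simp add: Phi_def Psi_def shift_def)


lemma distr_Psi: fixes W :: "('a::finite) set pmf" shows "distr (Bm W) (gw_space W) Psi = gw_space W"
proof -
  interpret P: product_prob_space "\<lambda>_::'a list. measure_pmf W" UNIV
    by (rule product_prob_spaceI) (simp add: prob_space_measure_pmf)
  interpret Q: prob_space "Qm W" by (rule prob_space_Qm)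
  have mP: "Psi \<in> measurable (Bm W) (PiM UNIV (\<lambda>_. measure_pmf W))"
    using measurable_Psi[of W] unfolding gw_space_def .
  have "distr (Bm W) (PiM UNIV (\<lambda>_. measure_pmf W)) Psi = PiM UNIV (\<lambda>_. measure_pmf W)"
  proof (rule P.PiM_eq)
    show "sets (distr (Bm W) (PiM UNIV (\<lambda>_. measure_pmf W)) Psi) = sets (PiM UNIV (\<lambda>_. measure_pmf W))"
      by simp
    fix J :: "'a list set" and F assume J: "finite J" "J \<subseteq> UNIV"
    define X where "X = prod_emb UNIV (\<lambda>_. measure_pmf W) J (PiE J F)"
    define A0 where "A0 = (if [] \<in> J then F [] else UNIV)"
    define Jj where "Jj j = {b. j # b \<in> J}" for j
    define Y where "Y j = prod_emb UNIV (\<lambda>_. measure_pmf W) (Jj j) (PiE (Jj j) (\<lambda>b. F (j # b)))" for j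
    have fJj: "finite (Jj j)" for j
      unfolding Jj_def by (rule finite_vimageI[of J "Cons j", unfolded vimage_def]) (use J in auto)
    have Xs: "X \<in> sets (PiM UNIV (\<lambda>_. measure_pmf W))"
      unfolding X_def using J by (intro sets_PiM_I) auto
    have Ys: "Y j \<in> sets (gw_space W)" for j
      unfolding Y_def gw_space_def using fJj by (intro sets_PiM_I) auto
    have memX: "\<omega> \<in> X \<longleftrightarrow> (\<forall>i\<in>J. \<omega> i \<in> F i)" for \<omega>
      by (auto simp: X_def prod_emb_def PiE_UNIV_domain)
    have memY: "\<omega> \<in> Y j \<longleftrightarrow> (\<forall>b\<in>Jj j. \<omega> b \<in> F (j # b))" for \<omega> j
      by (auto simp: Y_def prod_emb_def PiE_UNIV_domain)
    have pre: "Psi -` X \<inter> space (Bm W) = A0 \<times> (PiE UNIV Y)"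
    proof (rule set_eqI)
      fix x :: "'a set \<times> ('a \<Rightarrow> 'a list \<Rightarrow> 'a set)"
      obtain S ws where x: "x = (S, ws)" by (cases x)
      have "x \<in> Psi -` X \<inter> space (Bm W) \<longleftrightarrow> (\<forall>i\<in>J. Psi x i \<in> F i)" by (simp add: memX)
      also have "\<dots> \<longleftrightarrow> ([] \<in> J \<longrightarrow> S \<in> F []) \<and> (\<forall>j. \<forall>b\<in>Jj j. ws j b \<in> F (j # b))"
      proof
        assume a: "\<forall>i\<in>J. Psi x i \<in> F i"
        show "([] \<in> J \<longrightarrow> S \<in> F []) \<and> (\<forall>j. \<forall>b\<in>Jj j. ws j b \<in> F (j # b))"
          using a[rule_format, of "[]"] a[rule_format, of "_ # _"] by (auto simp: x Psi_def Jj_def)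
      next
        assume a: "([] \<in> J \<longrightarrow> S \<in> F []) \<and> (\<forall>j. \<forall>b\<in>Jj j. ws j b \<in> F (j # b))"
        show "\<forall>i\<in>J. Psi x i \<in> F i"
        proof
          fix i assume "i \<in> J"
          then show "Psi x i \<in> F i" using a by (cases i) (auto simp: x Psi_def Jj_def)
        qed
      qed
      also have "\<dots> \<longleftrightarrow> x \<in> A0 \<times> (PiE UNIV Y)"
        by (auto simp: x A0_def memY PiE_UNIV_domain Pi_iff)
      finally show "x \<in> Psi -` X \<inter> space (Bm W) \<longleftrightarrow> x \<in> A0 \<times> (PiE UNIV Y)" .
    qed
    have eQ: "emeasure (Qm W) (PiE UNIV Y) = (\<Prod>j\<in>UNIV. emeasure (gw_space W) (Y j))"
    proof -
      have "prod_emb UNIV (\<lambda>_. gw_space W) UNIV (PiE UNIV Y) = PiE UNIV Y"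
        by (auto simp: prod_emb_def PiE_UNIV_domain)
      then show ?thesis unfolding Qm_def
        using emeasure_PiM_emb[of UNIV "\<lambda>_. gw_space W" UNIV Y] Ys
        by (simp add: prob_space_gw)
    qed
    have eY: "emeasure (gw_space W) (Y j) = (\<Prod>b\<in>Jj j. emeasure (measure_pmf W) (F (j # b)))" for j
      unfolding Y_def gw_space_def
      by (rule emeasure_PiM_emb) (auto simp: fJj prob_space_measure_pmf)
    have "emeasure (distr (Bm W) (PiM UNIV (\<lambda>_. measure_pmf W)) Psi) X
        = emeasure (Bm W) (Psi -` X \<inter> space (Bm W))"
      by (rule emeasure_distr[OF mP Xs])
    also have "\<dots> = emeasure (Bm W) (A0 \<times> (PiE UNIV Y))" by (simp only: pre)
    also have "\<dots> = emeasure (measure_pmf W) A0 * emeasure (Qm W) (PiE UNIV Y)"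
      unfolding Bm_def
      by (rule Q.emeasure_pair_measure_Times) (auto simp: Qm_def intro!: sets_PiM_I_finite Ys)
    also have "\<dots> = emeasure (measure_pmf W) A0 * (\<Prod>j\<in>UNIV. \<Prod>b\<in>Jj j. emeasure (measure_pmf W) (F (j # b)))"
      by (simp add: eQ eY)
    also have "(\<Prod>j\<in>UNIV. \<Prod>b\<in>Jj j. emeasure (measure_pmf W) (F (j # b)))
        = (\<Prod>i\<in>J - {[]}. emeasure (measure_pmf W) (F i))"
    proof -
      have "(\<Prod>j\<in>UNIV. \<Prod>b\<in>Jj j. emeasure (measure_pmf W) (F (j # b)))
          = (\<Prod>(j, b)\<in>Sigma UNIV Jj. emeasure (measure_pmf W) (F (j # b)))"
        by (rule prod.Sigma) (auto simp: fJj)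
      also have "\<dots> = (\<Prod>x\<in>Sigma UNIV Jj. (\<lambda>i. emeasure (measure_pmf W) (F i)) ((\<lambda>(j, b). j # b) x))"
        by (rule prod.cong) auto
      also have "\<dots> = (\<Prod>i\<in>J - {[]}. emeasure (measure_pmf W) (F i))"
      proof (rule prod.reindex_bij_betw)
        show "bij_betw (\<lambda>(j, b). j # b) (Sigma UNIV Jj) (J - {[]})"
          unfolding bij_betw_def
        proof
          show "inj_on (\<lambda>(j, b). j # b) (Sigma UNIV Jj)" by (auto simp: inj_on_def)
          show "(\<lambda>(j, b). j # b) ` Sigma UNIV Jj = J - {[]}"
          proof
            show "(\<lambda>(j, b). j # b) ` Sigma UNIV Jj \<subseteq> J - {[]}" by (auto simp: Jj_def)
            show "J - {[]} \<subseteq> (\<lambda>(j, b). j # b) ` Sigma UNIV Jj"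
            proof
              fix i assume i: "i \<in> J - {[]}"
              then obtain j b where "i = j # b" by (cases i) auto
              then show "i \<in> (\<lambda>(j, b). j # b) ` Sigma UNIV Jj" using i
                by (auto simp: Jj_def image_iff)
            qed
          qed
        qed
      qed
      finally show ?thesis .
    qed
    also have "emeasure (measure_pmf W) A0 * (\<Prod>i\<in>J - {[]}. emeasure (measure_pmf W) (F i))
        = (\<Prod>i\<in>J. emeasure (measure_pmf W) (F i))"
    proof (cases "[] \<in> J")
      case True
      then have "J = insert [] (J - {[]})" by auto
      then have "(\<Prod>i\<in>J. emeasure (measure_pmf W) (F i)) = emeasure (measure_pmf W) (F []) * (\<Prod>i\<in>J - {[]}. emeasure (measure_pmf W) (F i))"
        using J by (metis Diff_iff finite_Diff insertI1 prod.insert)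
      then show ?thesis using True by (simp add: A0_def)
    next
      case False
      then show ?thesis by (simp add: A0_def measure_pmf.emeasure_space_1[simplified])
    qed
    finally show "emeasure (distr (Bm W) (PiM UNIV (\<lambda>_. measure_pmf W)) Psi) (prod_emb UNIV (\<lambda>_. measure_pmf W) J (PiE J F))
        = (\<Prod>j\<in>J. emeasure (measure_pmf W) (F j))" unfolding X_def .
  qed
  then show ?thesis unfolding gw_space_def .
qed

lemma distr_Phi: fixes W :: "('a::finite) set pmf" shows "distr (gw_space W) (Bm W) Phi = Bm W"
proof -
  have "distr (gw_space W) (Bm W) Phi = distr (distr (Bm W) (gw_space W) Psi) (Bm W) Phi"
    by (simp add: distr_Psi)
  also have "\<dots> = distr (Bm W) (Bm W) (Phi \<circ> Psi)"
    by (rule distr_distr[OF measurable_Phi measurable_Psi])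
  also have "\<dots> = distr (Bm W) (Bm W) (\<lambda>x. x)"
    by (rule distr_cong) (auto simp: Phi_Psi)
  finally show ?thesis by simp
qed


lemma nn_integral_pmf_finite_sum:
  fixes W :: "('a::finite) set pmf"
  shows "(\<integral>\<^sup>+S. f S \<partial>measure_pmf W) = (\<Sum>S\<in>UNIV. ennreal (pmf W S) * f S)"
  by (simp add: nn_integral_measure_pmf nn_integral_count_space_finite)

lemma nn_integral_Phi:
  fixes W :: "('a::finite) set pmf"
  assumes g: "g \<in> borel_measurable (Bm W)"
  shows "(\<integral>\<^sup>+\<omega>. g (Phi \<omega>) \<partial>gw_space W) = (\<integral>\<^sup>+S. \<integral>\<^sup>+ws. g (S, ws) \<partial>Qm W \<partial>measure_pmf W)"
proof -
  interpret Q: prob_space "Qm W" by (rule prob_space_Qm)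
  have "(\<integral>\<^sup>+\<omega>. g (Phi \<omega>) \<partial>gw_space W) = (\<integral>\<^sup>+x. g x \<partial>distr (gw_space W) (Bm W) Phi)"
  proof -
    have g': "g \<in> borel_measurable (distr (gw_space W) (Bm W) Phi)" using g by (simp add: distr_Phi)
    show ?thesis by (rule nn_integral_distr[symmetric, OF measurable_Phi g'])
  qed
  also have "\<dots> = (\<integral>\<^sup>+x. g x \<partial>Bm W)" by (simp add: distr_Phi)
  also have "\<dots> = (\<integral>\<^sup>+S. \<integral>\<^sup>+ws. g (S, ws) \<partial>Qm W \<partial>measure_pmf W)"
    unfolding Bm_def by (rule Q.nn_integral_fst[symmetric]) (use g in \<open>simp add: Bm_def\<close>)
  finally show ?thesis .
qed

lemma nn_branch:
  fixes W :: "('a::finite) set pmf" and G :: "'a set \<Rightarrow> ('a \<Rightarrow> 'a list \<Rightarrow> 'a set) \<Rightarrow> ennreal"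
  assumes G: "\<And>S. G S \<in> borel_measurable (Qm W)"
  shows "(\<integral>\<^sup>+\<omega>. G (\<omega> []) (\<lambda>j. shift j \<omega>) \<partial>gw_space W) = (\<Sum>S\<in>UNIV. ennreal (pmf W S) * (\<integral>\<^sup>+ws. G S ws \<partial>Qm W))"
    and "(\<lambda>\<omega>. G (\<omega> []) (\<lambda>j. shift j \<omega>)) \<in> borel_measurable (gw_space W)"
proof -
  define g where "g x = (\<Sum>S\<in>UNIV. indicator {S} (fst x) * G S (snd x))" for x
  have geq: "g x = G (fst x) (snd x)" for x
  proof -
    have "g x = (\<Sum>S\<in>UNIV. if S = fst x then G S (snd x) else 0)"
      unfolding g_def by (rule sum.cong) (auto simp: indicator_def)
    also have "\<dots> = G (fst x) (snd x)" by (simp add: sum.delta')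
    finally show ?thesis .
  qed
  have gm: "g \<in> borel_measurable (Bm W)"
  proof -
    have "(\<lambda>x. indicator {S} (fst x) * G S (snd x)) \<in> borel_measurable (Bm W)" for S
    proof (intro borel_measurable_times_ennreal)
      show "(\<lambda>x. indicator {S} (fst x) :: ennreal) \<in> borel_measurable (Bm W)"
        by (rule meas_fst_Bm) simp
      show "(\<lambda>x. G S (snd x)) \<in> borel_measurable (Bm W)"
        unfolding Bm_def by (rule measurable_compose[OF measurable_snd G])
    qed
    then show ?thesis unfolding g_def by (intro borel_measurable_sum) auto
  qed
  have phi: "G (\<omega> []) (\<lambda>j. shift j \<omega>) = g (Phi \<omega>)" for \<omega>
    by (simp add: geq Phi_def)
  show "(\<lambda>\<omega>. G (\<omega> []) (\<lambda>j. shift j \<omega>)) \<in> borel_measurable (gw_space W)"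
    unfolding phi by (rule measurable_compose[OF measurable_Phi gm])
  have "(\<integral>\<^sup>+\<omega>. G (\<omega> []) (\<lambda>j. shift j \<omega>) \<partial>gw_space W) = (\<integral>\<^sup>+\<omega>. g (Phi \<omega>) \<partial>gw_space W)"
    by (simp only: phi)
  also have "\<dots> = (\<integral>\<^sup>+S. \<integral>\<^sup>+ws. g (S, ws) \<partial>Qm W \<partial>measure_pmf W)"
    by (rule nn_integral_Phi[OF gm])
  also have "\<dots> = (\<Sum>S\<in>UNIV. ennreal (pmf W S) * (\<integral>\<^sup>+ws. G S ws \<partial>Qm W))"
    by (simp add: geq nn_integral_pmf_finite_sum)
  finally show "(\<integral>\<^sup>+\<omega>. G (\<omega> []) (\<lambda>j. shift j \<omega>) \<partial>gw_space W) = (\<Sum>S\<in>UNIV. ennreal (pmf W S) * (\<integral>\<^sup>+ws. G S ws \<partial>Qm W))" .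
qed

lemma Qm_prod:
  fixes W :: "('a::finite) set pmf" and h :: "'a \<Rightarrow> ('a list \<Rightarrow> 'a set) \<Rightarrow> ennreal"
  assumes h: "\<And>j. j \<in> S \<Longrightarrow> h j \<in> borel_measurable (gw_space W)"
  shows "(\<integral>\<^sup>+ws. (\<Prod>j\<in>S. h j (ws j)) \<partial>Qm W) = (\<Prod>j\<in>S. \<integral>\<^sup>+\<omega>. h j \<omega> \<partial>gw_space W)"
proof -
  interpret P: product_prob_space "\<lambda>_::'a. gw_space W" UNIV
    by (rule product_prob_spaceI) (simp add: prob_space_gw)
  define h' where "h' j = (if j \<in> S then h j else (\<lambda>_. 1))" for j
  have "(\<integral>\<^sup>+ws. (\<Prod>j\<in>S. h j (ws j)) \<partial>Qm W) = (\<integral>\<^sup>+ws. (\<Prod>j\<in>UNIV. h' j (ws j)) \<partial>Qm W)"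
  proof (rule nn_integral_cong)
    fix ws :: "'a \<Rightarrow> 'a list \<Rightarrow> 'a set"
    have "(\<Prod>j\<in>S. h j (ws j)) = (\<Prod>j\<in>UNIV \<inter> S. h j (ws j))" by simp
    also have "\<dots> = (\<Prod>j\<in>UNIV. if j \<in> S then h j (ws j) else 1)" by (rule prod.inter_restrict) simp
    finally show "(\<Prod>j\<in>S. h j (ws j)) = (\<Prod>j\<in>UNIV. h' j (ws j))" by (auto simp: h'_def intro!: prod.cong)
  qed
  also have "\<dots> = (\<Prod>j\<in>UNIV. \<integral>\<^sup>+\<omega>. h' j \<omega> \<partial>gw_space W)"
    unfolding Qm_def by (rule P.product_nn_integral_prod) (auto simp: h'_def h)
  also have "\<dots> = (\<Prod>j\<in>UNIV. if j \<in> S then (\<integral>\<^sup>+\<omega>. h j \<omega> \<partial>gw_space W) else 1)"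
    by (rule prod.cong) (auto simp: h'_def prob_space.emeasure_space_1[OF prob_space_gw])
  also have "\<dots> = (\<Prod>j\<in>UNIV \<inter> S. \<integral>\<^sup>+\<omega>. h j \<omega> \<partial>gw_space W)" by (rule prod.inter_restrict[symmetric]) simp
  finally show ?thesis by simp
qed

lemma meas_Qm_comp:
  fixes W :: "('a::finite) set pmf"
  assumes "h \<in> borel_measurable (gw_space W)"
  shows "(\<lambda>ws. h (ws j)) \<in> borel_measurable (Qm W)"
  by (rule measurable_compose[OF meas_comp_Qm assms])




locale pgf =
  fixes p :: "'s::finite \<Rightarrow> real" and k :: "'s \<Rightarrow> nat"
  assumes p_nonneg: "\<And>S. 0 \<le> p S"
    and p_sum: "(\<Sum>S\<in>UNIV. p S) = 1"
    and p_mean: "(\<Sum>S\<in>UNIV. p S * real (k S)) > 1"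
begin

definition F :: "real \<Rightarrow> real" where
  "F t = (\<Sum>S\<in>UNIV. p S * t ^ k S)"

definition h :: "real \<Rightarrow> real" where
  "h t = 1 - (\<Sum>S\<in>UNIV. p S * (\<Sum>i<k S. t ^ i))"

lemma F_h: "F t - t = (1 - t) * h t"
proof -
  have "F t = (\<Sum>S\<in>UNIV. p S * (1 - (1 - t) * (\<Sum>i<k S. t ^ i)))"
    unfolding F_def by (rule sum.cong) (auto simp: one_diff_power_eq[symmetric])
  also have "\<dots> = (\<Sum>S\<in>UNIV. p S - (1 - t) * (p S * (\<Sum>i<k S. t ^ i)))"
    by (rule sum.cong) (auto simp: algebra_simps)
  also have "\<dots> = (\<Sum>S\<in>UNIV. p S) - (\<Sum>S\<in>UNIV. (1 - t) * (p S * (\<Sum>i<k S. t ^ i)))"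
    by (rule sum_subtractf)
  also have "\<dots> = (\<Sum>S\<in>UNIV. p S) - (1 - t) * (\<Sum>S\<in>UNIV. p S * (\<Sum>i<k S. t ^ i))"
    by (simp add: sum_distrib_left)
  finally show ?thesis unfolding h_def p_sum by (simp add: algebra_simps)
qed

lemma exists_S0: "\<exists>S0. p S0 > 0 \<and> k S0 \<ge> 2"
proof (rule ccontr)
  assume na: "\<not> ?thesis"
  have "p S * real (k S) \<le> p S" for S
  proof (cases "p S = 0")
    case True then show ?thesis by simp
  next
    case False
    then have "p S > 0" using p_nonneg[of S] by simp
    then have "k S \<le> 1" using na by (metis not_le Suc_1 Suc_leI le_Suc_eq)
    then have "real (k S) \<le> 1" by simp
    then have "p S * real (k S) \<le> p S * 1" using p_nonneg[of S] by (rule mult_left_mono)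
    then show ?thesis by simp
  qed
  then have "(\<Sum>S\<in>UNIV. p S * real (k S)) \<le> (\<Sum>S\<in>UNIV. p S)" by (intro sum_mono) auto
  then show False using p_mean p_sum by simp
qed

lemma h_strict_dec:
  assumes "0 \<le> x" "x < y"
  shows "h y < h x"
proof -
  obtain S0 where S0: "p S0 > 0" "k S0 \<ge> 2" using exists_S0 by blast
  have le: "(\<Sum>i<k S. x ^ i) \<le> (\<Sum>i<k S. y ^ i)" for S
    by (intro sum_mono power_mono) (use assms in auto)
  have lt: "(\<Sum>i<k S0. x ^ i) < (\<Sum>i<k S0. y ^ i)"
  proof (rule sum_strict_mono_ex1)
    show "\<forall>i\<in>{..<k S0}. x ^ i \<le> y ^ i" by (intro ballI power_mono) (use assms in auto)
    show "\<exists>i\<in>{..<k S0}. x ^ i < y ^ i" using S0 assms by (intro bexI[of _ 1]) auto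
  qed simp
  have "(\<Sum>S\<in>UNIV. p S * (\<Sum>i<k S. x ^ i)) < (\<Sum>S\<in>UNIV. p S * (\<Sum>i<k S. y ^ i))"
  proof (rule sum_strict_mono_ex1)
    show "\<forall>S\<in>UNIV. p S * (\<Sum>i<k S. x ^ i) \<le> p S * (\<Sum>i<k S. y ^ i)"
      using le p_nonneg by (simp add: mult_left_mono)
    show "\<exists>S\<in>UNIV. p S * (\<Sum>i<k S. x ^ i) < p S * (\<Sum>i<k S. y ^ i)"
      using lt S0 by (intro bexI[of _ S0]) auto
  qed simp
  then show ?thesis unfolding h_def by simp
qed

lemma h_1: "h 1 < 0"
  unfolding h_def using p_mean by simp

lemma h_0: "h 0 \<ge> 0"
proof -
  have "F 0 = h 0" using F_h[of 0] by simp
  moreover have "F 0 \<ge> 0" unfolding F_def using p_nonneg by (intro sum_nonneg) auto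
  ultimately show ?thesis by simp
qed

lemma h_cont: "continuous_on A h"
  unfolding h_def by (intro continuous_intros)

lemma F_cont: "continuous_on A F"
  unfolding F_def by (intro continuous_intros)

lemma F_mono: "0 \<le> x \<Longrightarrow> x \<le> y \<Longrightarrow> F x \<le> F y"
  unfolding F_def using p_nonneg by (intro sum_mono mult_left_mono power_mono) auto

lemma F_nonneg: "0 \<le> x \<Longrightarrow> 0 \<le> F x"
  unfolding F_def using p_nonneg by (intro sum_nonneg) auto

definition eta :: real where "eta = (SOME x. 0 \<le> x \<and> x < 1 \<and> h x = 0)"

lemma eta: "0 \<le> eta" "eta < 1" "h eta = 0"
proof -
  obtain x where x: "0 \<le> x" "x \<le> 1" "h x = 0"
    using IVT2'[of h 1 0 0] h_0 h_1 h_cont by force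
  then have "x < 1" using h_1 by (cases "x = 1") auto
  with x have "\<exists>x. 0 \<le> x \<and> x < 1 \<and> h x = 0" by blast
  then have "0 \<le> eta \<and> eta < 1 \<and> h eta = 0" unfolding eta_def by (rule someI_ex)
  then show "0 \<le> eta" "eta < 1" "h eta = 0" by auto
qed

lemma F_eta: "F eta = eta"
  using F_h[of eta] eta by simp

lemma F_above: "0 \<le> t \<Longrightarrow> t \<le> eta \<Longrightarrow> t \<le> F t"
proof -
  assume t: "0 \<le> t" "t \<le> eta"
  have "h t \<ge> 0"
  proof (cases "t = eta")
    case True then show ?thesis using eta by simp
  next
    case False then have "h eta < h t" using t by (intro h_strict_dec) auto
    then show ?thesis using eta by simp
  qed
  moreover have "1 - t > 0" using t eta by simp
  ultimately have "F t - t \<ge> 0" using F_h[of t] by simp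
  then show ?thesis by simp
qed

lemma F_below: "eta \<le> t \<Longrightarrow> t < 1 \<Longrightarrow> F t \<le> t"
proof -
  assume t: "eta \<le> t" "t < 1"
  have "h t \<le> 0"
  proof (cases "t = eta")
    case True then show ?thesis using eta by simp
  next
    case False then have "h t < h eta" using t eta by (intro h_strict_dec) auto
    then show ?thesis using eta by simp
  qed
  moreover have "1 - t > 0" using t by simp
  ultimately have "F t - t \<le> 0" using F_h[of t] by (simp add: mult_nonneg_nonpos)
  then show ?thesis by simp
qed

lemma fixed_unique: "0 \<le> t \<Longrightarrow> t < 1 \<Longrightarrow> F t = t \<Longrightarrow> t = eta"
proof -
  assume t: "0 \<le> t" "t < 1" "F t = t"
  then have "h t = 0" using F_h[of t] by simp
  show "t = eta"
  proof (rule ccontr)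
    assume "t \<noteq> eta"
    then have "t < eta \<or> eta < t" by auto
    then show False
      using h_strict_dec[of t eta] h_strict_dec[of eta t] eta t \<open>h t = 0\<close> by auto
  qed
qed

lemma limit_fixed:
  assumes lim: "(\<lambda>n. (F ^^ n) s) \<longlonglongrightarrow> L"
  shows "F L = L"
proof -
  have "(\<lambda>n. F ((F ^^ n) s)) \<longlonglongrightarrow> F L"
  proof -
    have "isCont F L" unfolding F_def by (intro continuous_intros)
    then show ?thesis by (rule isCont_tendsto_compose[OF _ lim])
  qed
  moreover have "(\<lambda>n. F ((F ^^ n) s)) = (\<lambda>n. (F ^^ Suc n) s)" by auto
  moreover have "(\<lambda>n. (F ^^ Suc n) s) \<longlonglongrightarrow> L" using lim by (rule LIMSEQ_Suc)
  ultimately show ?thesis using LIMSEQ_unique by metis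
qed

lemma iter_conv:
  assumes s: "0 \<le> s" "s < 1"
  shows "(\<lambda>n. (F ^^ n) s) \<longlonglongrightarrow> eta"
proof (cases "s \<le> eta")
  case True
  have inv: "s \<le> (F ^^ n) s \<and> (F ^^ n) s \<le> eta \<and> (F ^^ n) s \<le> (F ^^ Suc n) s" for n
  proof (induction n)
    case 0
    then show ?case using True s F_above[of s] by simp
  next
    case (Suc n)
    let ?t = "(F ^^ n) s"
    have a: "s \<le> F ?t" "F ?t \<le> eta" "F ?t \<le> F (F ?t)"
    proof -
      show "s \<le> F ?t" using Suc by simp
      show "F ?t \<le> eta" using F_mono[of ?t eta] F_eta Suc s by simp
      show "F ?t \<le> F (F ?t)" using F_above[of "F ?t"] F_mono[of ?t eta] F_eta Suc s by simp
    qed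
    then show ?case by simp
  qed
  have inc: "incseq (\<lambda>n. (F ^^ n) s)" using inv by (intro incseq_SucI) auto
  obtain L where L: "(\<lambda>n. (F ^^ n) s) \<longlonglongrightarrow> L" "\<forall>i. (F ^^ i) s \<le> L"
    using incseq_convergent[OF inc, of eta] inv by blast
  have "L \<le> eta" using L(1) inv by (intro LIMSEQ_le_const2) auto
  have "s \<le> L" using L(2)[rule_format, of 0] by simp
  have "L = eta" using limit_fixed[OF L(1)] \<open>L \<le> eta\<close> \<open>s \<le> L\<close> s eta
    by (intro fixed_unique) auto
  then show ?thesis using L by simp
next
  case False
  have inv: "eta \<le> (F ^^ n) s \<and> (F ^^ n) s \<le> s \<and> (F ^^ Suc n) s \<le> (F ^^ n) s" for n
  proof (induction n)
    case 0
    then show ?case using False s F_below[of s] by simp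
  next
    case (Suc n)
    let ?t = "(F ^^ n) s"
    have "eta \<le> F ?t" using F_mono[of eta ?t] F_eta Suc eta by simp
    moreover have "F ?t \<le> s" using Suc by simp
    moreover have "F (F ?t) \<le> F ?t" using F_below[of "F ?t"] \<open>eta \<le> F ?t\<close> \<open>F ?t \<le> s\<close> s by simp
    ultimately show ?case by simp
  qed
  have dec: "decseq (\<lambda>n. (F ^^ n) s)" using inv by (intro decseq_SucI) auto
  obtain L where L: "(\<lambda>n. (F ^^ n) s) \<longlonglongrightarrow> L" "\<forall>i. L \<le> (F ^^ i) s"
    using decseq_convergent[OF dec, of eta] inv by blast
  have "eta \<le> L" using L(1) inv by (intro LIMSEQ_le_const) auto
  have "L \<le> s" using L(2)[rule_format, of 0] by simp
  have "L = eta" using limit_fixed[OF L(1)] \<open>eta \<le> L\<close> \<open>L \<le> s\<close> s eta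
    by (intro fixed_unique) auto
  then show ?thesis using L by simp
qed

end




locale gwl =
  fixes W :: "('a::finite) set pmf" and r :: "'a \<Rightarrow> real" and \<delta> :: real
  assumes r_range: "\<And>i. 0 < r i \<and> r i < 1"
    and supercrit: "(\<Sum>S\<in>UNIV. pmf W S * real (card S)) > 1"
    and delta_eq: "(\<Sum>S\<in>UNIV. pmf W S * (\<Sum>i\<in>S. r i powr \<delta>)) = 1"
begin

sublocale pgf "pmf W" card
proof
  show "(\<Sum>S\<in>UNIV. pmf W S) = 1" by (rule sum_pmf_eq_1) auto
qed (auto simp: supercrit)

abbreviation P where "P \<equiv> gw_space W"

lemma P_prob: "prob_space P" by (rule prob_space_gw)

definition rmin where "rmin = Min (range r)"
definition rmax where "rmax = Max (range r)"

lemma rmin: "0 < rmin" "rmin < 1" "rmin \<le> r j"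
proof -
  have f: "finite (range r)" "range r \<noteq> {}" by auto
  have "rmin \<in> range r" unfolding rmin_def using f by (rule Min_in)
  then show "0 < rmin" "rmin < 1" using r_range by auto
  show "rmin \<le> r j" unfolding rmin_def using f by auto
qed

lemma rmax: "0 < rmax" "rmax < 1" "r j \<le> rmax"
proof -
  have f: "finite (range r)" "range r \<noteq> {}" by auto
  have "rmax \<in> range r" unfolding rmax_def using f by (rule Max_in)
  then show "0 < rmax" "rmax < 1" using r_range by auto
  show "r j \<le> rmax" unfolding rmax_def using f by auto
qed

lemma rj: "0 < r j" "r j < 1" using r_range[of j] by auto

lemma delta_pos: "\<delta> > 0"
proof (rule ccontr)
  assume "\<not> \<delta> > 0"
  then have d: "\<delta> \<le> 0" by simp
  have "1 \<le> r i powr \<delta>" for i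
  proof -
    have "ln (r i) < 0" using rj[of i] by simp
    then have "0 \<le> \<delta> * ln (r i)" using d by (simp add: mult_nonpos_nonpos)
    then show ?thesis using rj[of i] by (simp add: powr_def)
  qed
  then have "real (card S) \<le> (\<Sum>i\<in>S. r i powr \<delta>)" for S :: "'a set"
    using sum_mono[of S "\<lambda>_. 1" "\<lambda>i. r i powr \<delta>"] by simp
  then have "(\<Sum>S\<in>UNIV. pmf W S * real (card S)) \<le> (\<Sum>S\<in>UNIV. pmf W S * (\<Sum>i\<in>S. r i powr \<delta>))"
    by (intro sum_mono mult_left_mono) auto
  then show False using supercrit delta_eq by simp
qed

lemma scale_induct[consumes 1]:
  assumes s: "0 < \<sigma>"
    and base: "\<And>\<sigma>. 1 \<le> \<sigma> \<Longrightarrow> Q \<sigma>"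
    and step: "\<And>\<sigma>. 0 < \<sigma> \<Longrightarrow> \<sigma> < 1 \<Longrightarrow> (\<And>j. Q (\<sigma> / r j)) \<Longrightarrow> Q \<sigma>"
  shows "Q \<sigma>"
proof -
  have *: "\<forall>\<sigma>. rmax ^ n \<le> \<sigma> \<longrightarrow> Q \<sigma>" for n
  proof (induction n)
    case 0 then show ?case using base by simp
  next
    case (Suc n)
    show ?case
    proof (intro allI impI)
      fix \<sigma> assume a: "rmax ^ Suc n \<le> \<sigma>"
      show "Q \<sigma>"
      proof (cases "1 \<le> \<sigma>")
        case True then show ?thesis by (rule base)
      next
        case False
        have pos: "0 < \<sigma>" using a rmax by (meson less_le_trans zero_less_power)
        show ?thesis
        proof (rule step[OF pos])
          show "\<sigma> < 1" using False by simp
          fix j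
          have "rmax ^ n \<le> \<sigma> / rmax" using a rmax by (simp add: field_simps)
          also have "\<sigma> / rmax \<le> \<sigma> / r j" using pos rj[of j] rmax(3)[of j] by (intro divide_left_mono) auto
          finally show "Q (\<sigma> / r j)" using Suc by simp
        qed
      qed
    qed
  qed
  obtain n where "rmax ^ n < \<sigma>" using real_arch_pow_inv[OF s rmax(2)] by blast
  then show ?thesis using *[of n] by simp
qed

lemma Cset_finite: "0 < \<sigma> \<Longrightarrow> finite (Cset r \<sigma>)"
proof (induction rule: scale_induct)
  case (1 \<sigma>) then show ?case by (simp add: Cset_def)
next
  case (2 \<sigma>)
  have "finite (Cset r (\<sigma> / r j))" for j using 2 rj[of j] by simp
  then show ?case using 2 by (simp add: Cset_rec[OF r_range])
qed

definition Nt :: "real \<Rightarrow> ('a list \<Rightarrow> 'a set) \<Rightarrow> real" where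
  "Nt \<sigma> \<omega> = real (card (gw_tree \<omega> \<inter> Cset r \<sigma>))"

lemma Nt_ge1: "1 \<le> \<sigma> \<Longrightarrow> Nt \<sigma> \<omega> = 1"
  by (simp add: Nt_def Cset_def tree_char)

lemma Nt_nonneg: "0 \<le> Nt \<sigma> \<omega>" by (simp add: Nt_def)

lemma Nt_rec:
  assumes s: "0 < \<sigma>" "\<sigma> < 1"
  shows "Nt \<sigma> \<omega> = (\<Sum>j\<in>\<omega> []. Nt (\<sigma> / r j) (shift j \<omega>))"
proof -
  define A where "A j = gw_tree (shift j \<omega>) \<inter> Cset r (\<sigma> / r j)" for j
  have eq: "gw_tree \<omega> \<inter> Cset r \<sigma> = (\<Union>j\<in>\<omega> []. Cons j ` A j)"
  proof (rule set_eqI)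
    fix x
    have r1: "x \<in> (\<Union>j\<in>\<omega> []. Cons j ` A j) \<longleftrightarrow> (\<exists>j b. x = j # b \<and> j \<in> \<omega> [] \<and> b \<in> A j)" by blast
    have r2: "x \<in> gw_tree \<omega> \<inter> Cset r \<sigma> \<longleftrightarrow> (\<exists>j b. x = j # b \<and> j \<in> \<omega> [] \<and> b \<in> A j)"
      unfolding Cset_rec[OF r_range s] A_def
      by (cases x) (auto simp: tree_char intree_Cons)
    show "x \<in> gw_tree \<omega> \<inter> Cset r \<sigma> \<longleftrightarrow> x \<in> (\<Union>j\<in>\<omega> []. Cons j ` A j)"
      using r1 r2 by simp
  qed
  have fin: "finite (A j)" for j
    unfolding A_def using Cset_finite[of "\<sigma> / r j"] s rj[of j] by auto
  have "card (gw_tree \<omega> \<inter> Cset r \<sigma>) = (\<Sum>j\<in>\<omega> []. card (Cons j ` A j))"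
    unfolding eq by (rule card_UN_disjoint) (auto simp: fin)
  also have "\<dots> = (\<Sum>j\<in>\<omega> []. card (A j))"
    by (rule sum.cong) (auto intro!: card_image)
  finally show ?thesis unfolding Nt_def A_def by simp
qed

lemma sets_hd: "{\<omega>. j \<in> \<omega> []} \<in> sets P"
proof -
  have "(\<lambda>\<omega>. \<omega> []) -` {S. j \<in> S} \<inter> space P \<in> sets P"
    by (rule measurable_sets[OF meas_comp_gw]) simp
  then show ?thesis by (simp add: vimage_def)
qed

lemma Nt_meas: "0 < \<sigma> \<Longrightarrow> Nt \<sigma> \<in> borel_measurable P"
proof (induction rule: scale_induct)
  case (1 \<sigma>) then show ?case by (simp add: Nt_ge1)
next
  case (2 \<sigma>)
  have eq: "Nt \<sigma> = (\<lambda>\<omega>. \<Sum>j\<in>UNIV. (if j \<in> \<omega> [] then Nt (\<sigma> / r j) (shift j \<omega>) else 0))"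
    using 2 by (auto simp: Nt_rec sum.If_cases)
  have m1: "(\<lambda>\<omega>. Nt (\<sigma> / r j) (shift j \<omega>)) \<in> borel_measurable P" for j
    using measurable_compose[OF measurable_shift "2.IH"[of j]] by simp
  have m2: "{\<omega> \<in> space P. j \<in> \<omega> []} \<in> sets P" for j using sets_hd[of j] by simp
  have "(\<lambda>\<omega>. if j \<in> \<omega> [] then Nt (\<sigma> / r j) (shift j \<omega>) else 0) \<in> borel_measurable P" for j
    by (rule measurable_If[OF m1 _ m2]) simp
  then show ?case unfolding eq by (intro borel_measurable_sum) auto
qed


definition a :: "real \<Rightarrow> ennreal" where "a \<sigma> = (\<integral>\<^sup>+\<omega>. ennreal (Nt \<sigma> \<omega>) \<partial>P)"
definition b :: "real \<Rightarrow> ennreal" where "b \<sigma> = (\<integral>\<^sup>+\<omega>. ennreal ((Nt \<sigma> \<omega>)\<^sup>2) \<partial>P)"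

lemma Nt_enn_meas: "0 < \<sigma> \<Longrightarrow> (\<lambda>\<omega>. ennreal (Nt \<sigma> \<omega>)) \<in> borel_measurable P"
  using Nt_meas by measurable

lemma Nt2_enn_meas: "0 < \<sigma> \<Longrightarrow> (\<lambda>\<omega>. ennreal ((Nt \<sigma> \<omega>)\<^sup>2)) \<in> borel_measurable P"
  using Nt_meas by measurable

lemma pos_div: "0 < \<sigma> \<Longrightarrow> 0 < \<sigma> / r j" using rj[of j] by simp

lemma Qm_single:
  assumes "f \<in> borel_measurable P"
  shows "(\<integral>\<^sup>+ws. f (ws j) \<partial>Qm W) = (\<integral>\<^sup>+\<omega>. f \<omega> \<partial>P)"
  using Qm_prod[of "{j}" "\<lambda>_. f" W] assms by simp

lemma Qm_pair:
  assumes "f \<in> borel_measurable P" "g \<in> borel_measurable P" "i \<noteq> j"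
  shows "(\<integral>\<^sup>+ws. f (ws i) * g (ws j) \<partial>Qm W) = (\<integral>\<^sup>+\<omega>. f \<omega> \<partial>P) * (\<integral>\<^sup>+\<omega>. g \<omega> \<partial>P)"
proof -
  have "(\<integral>\<^sup>+ws. (\<Prod>l\<in>{i, j}. (if l = i then f else g) (ws l)) \<partial>Qm W)
      = (\<Prod>l\<in>{i, j}. \<integral>\<^sup>+\<omega>. (if l = i then f else g) \<omega> \<partial>P)"
    by (rule Qm_prod) (use assms in auto)
  then show ?thesis using assms(3) by simp
qed

lemma a_rec:
  assumes s: "0 < \<sigma>" "\<sigma> < 1"
  shows "a \<sigma> = (\<Sum>S\<in>UNIV. ennreal (pmf W S) * (\<Sum>j\<in>S. a (\<sigma> / r j)))"
proof -
  define G where "G S ws = (\<Sum>j\<in>S. ennreal (Nt (\<sigma> / r j) (ws j)))" for S and ws :: "'a \<Rightarrow> 'a list \<Rightarrow> 'a set"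
  have Gm: "G S \<in> borel_measurable (Qm W)" for S
    unfolding G_def
    by (intro borel_measurable_sum meas_Qm_comp Nt_enn_meas pos_div s)
  have "a \<sigma> = (\<integral>\<^sup>+\<omega>. G (\<omega> []) (\<lambda>j. shift j \<omega>) \<partial>P)"
    unfolding a_def G_def using s by (simp add: Nt_rec Nt_nonneg)
  also have "\<dots> = (\<Sum>S\<in>UNIV. ennreal (pmf W S) * (\<integral>\<^sup>+ws. G S ws \<partial>Qm W))"
    by (rule nn_branch(1)[OF Gm])
  also have "\<dots> = (\<Sum>S\<in>UNIV. ennreal (pmf W S) * (\<Sum>j\<in>S. a (\<sigma> / r j)))"
  proof (rule sum.cong[OF refl])
    fix S
    have "(\<integral>\<^sup>+ws. G S ws \<partial>Qm W) = (\<Sum>j\<in>S. \<integral>\<^sup>+ws. ennreal (Nt (\<sigma> / r j) (ws j)) \<partial>Qm W)"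
      unfolding G_def
      by (rule nn_integral_sum) (intro meas_Qm_comp Nt_enn_meas pos_div s)
    also have "\<dots> = (\<Sum>j\<in>S. a (\<sigma> / r j))"
      unfolding a_def by (intro sum.cong refl Qm_single Nt_enn_meas pos_div s)
    finally show "ennreal (pmf W S) * (\<integral>\<^sup>+ws. G S ws \<partial>Qm W) = ennreal (pmf W S) * (\<Sum>j\<in>S. a (\<sigma> / r j))"
      by simp
  qed
  finally show ?thesis .
qed

lemma b_rec:
  assumes s: "0 < \<sigma>" "\<sigma> < 1"
  shows "b \<sigma> = (\<Sum>S\<in>UNIV. ennreal (pmf W S) *
      (\<Sum>i\<in>S. \<Sum>j\<in>S. if i = j then b (\<sigma> / r i) else a (\<sigma> / r i) * a (\<sigma> / r j)))"
proof -
  define X where "X j \<omega> = Nt (\<sigma> / r j) \<omega>" for j \<omega>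
  have Xm: "(\<lambda>\<omega>. ennreal (X j \<omega>)) \<in> borel_measurable P" for j
    unfolding X_def by (intro Nt_enn_meas pos_div s)
  have X2m: "(\<lambda>\<omega>. ennreal ((X j \<omega>)\<^sup>2)) \<in> borel_measurable P" for j
    unfolding X_def by (intro Nt2_enn_meas pos_div s)
  define G where "G S ws = (\<Sum>i\<in>S. \<Sum>j\<in>S. ennreal (X i (ws i)) * ennreal (X j (ws j)))"
    for S and ws :: "'a \<Rightarrow> 'a list \<Rightarrow> 'a set"
  have Gm: "G S \<in> borel_measurable (Qm W)" for S
    unfolding G_def
    by (intro borel_measurable_sum borel_measurable_times_ennreal meas_Qm_comp Xm)
  have sq: "ennreal ((\<Sum>j\<in>S. x j)\<^sup>2) = (\<Sum>i\<in>S. \<Sum>j\<in>S. ennreal (x i) * ennreal (x j))"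
    if "\<And>j. 0 \<le> x j" for S and x :: "'a \<Rightarrow> real"
  proof -
    have "(\<Sum>j\<in>S. x j)\<^sup>2 = (\<Sum>i\<in>S. \<Sum>j\<in>S. x i * x j)"
      by (simp add: power2_eq_square sum_product)
    then show ?thesis using that
      by (simp add: ennreal_mult[symmetric] sum_nonneg mult_nonneg_nonneg)
  qed
  have "b \<sigma> = (\<integral>\<^sup>+\<omega>. G (\<omega> []) (\<lambda>j. shift j \<omega>) \<partial>P)"
    unfolding b_def G_def X_def using s by (simp add: Nt_rec Nt_nonneg sq)
  also have "\<dots> = (\<Sum>S\<in>UNIV. ennreal (pmf W S) * (\<integral>\<^sup>+ws. G S ws \<partial>Qm W))"
    by (rule nn_branch(1)[OF Gm])
  also have "\<dots> = (\<Sum>S\<in>UNIV. ennreal (pmf W S) *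
      (\<Sum>i\<in>S. \<Sum>j\<in>S. if i = j then b (\<sigma> / r i) else a (\<sigma> / r i) * a (\<sigma> / r j)))"
  proof (rule sum.cong[OF refl])
    fix S
    have "(\<integral>\<^sup>+ws. G S ws \<partial>Qm W) = (\<Sum>i\<in>S. \<Sum>j\<in>S. \<integral>\<^sup>+ws. ennreal (X i (ws i)) * ennreal (X j (ws j)) \<partial>Qm W)"
    proof -
      have "(\<integral>\<^sup>+ws. G S ws \<partial>Qm W) = (\<Sum>i\<in>S. \<integral>\<^sup>+ws. (\<Sum>j\<in>S. ennreal (X i (ws i)) * ennreal (X j (ws j))) \<partial>Qm W)"
        unfolding G_def
        by (rule nn_integral_sum) (intro borel_measurable_sum borel_measurable_times_ennreal meas_Qm_comp Xm)
      also have "\<dots> = (\<Sum>i\<in>S. \<Sum>j\<in>S. \<integral>\<^sup>+ws. ennreal (X i (ws i)) * ennreal (X j (ws j)) \<partial>Qm W)"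
        by (intro sum.cong refl nn_integral_sum borel_measurable_times_ennreal meas_Qm_comp Xm)
      finally show ?thesis .
    qed
    also have "\<dots> = (\<Sum>i\<in>S. \<Sum>j\<in>S. if i = j then b (\<sigma> / r i) else a (\<sigma> / r i) * a (\<sigma> / r j))"
    proof (intro sum.cong refl)
      fix i j
      show "(\<integral>\<^sup>+ws. ennreal (X i (ws i)) * ennreal (X j (ws j)) \<partial>Qm W)
          = (if i = j then b (\<sigma> / r i) else a (\<sigma> / r i) * a (\<sigma> / r j))"
      proof (cases "i = j")
        case True
        have "(\<integral>\<^sup>+ws. ennreal (X i (ws i)) * ennreal (X i (ws i)) \<partial>Qm W) = (\<integral>\<^sup>+ws. ennreal ((X i (ws i))\<^sup>2) \<partial>Qm W)"
          by (simp add: power2_eq_square ennreal_mult X_def Nt_nonneg)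
        also have "\<dots> = b (\<sigma> / r i)" unfolding b_def
          using Qm_single[OF X2m[of i], of i] by (simp add: X_def)
        finally show ?thesis using True by simp
      next
        case False
        show ?thesis using Qm_pair[OF Xm[of i] Xm[of j] False] False by (simp add: a_def X_def)
      qed
    qed
    finally show "ennreal (pmf W S) * (\<integral>\<^sup>+ws. G S ws \<partial>Qm W) = ennreal (pmf W S) *
      (\<Sum>i\<in>S. \<Sum>j\<in>S. if i = j then b (\<sigma> / r i) else a (\<sigma> / r i) * a (\<sigma> / r j))"
      by simp
  qed
  finally show ?thesis .
qed


lemma pw: "0 < \<sigma> \<Longrightarrow> (\<sigma> / r j) powr (- \<delta>) = \<sigma> powr (- \<delta>) * r j powr \<delta>"
  using rj[of j] by (simp add: powr_divide powr_minus_divide)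

lemma rho_bounds: "0 < r j powr \<delta>" "r j powr \<delta> < 1"
proof -
  show "0 < r j powr \<delta>" using rj[of j] by simp
  have "r j powr \<delta> < 1 powr \<delta>" using rj[of j] delta_pos by (intro powr_less_mono2) auto
  then show "r j powr \<delta> < 1" by simp
qed

lemma u_ge1: "0 < x \<Longrightarrow> x \<le> 1 \<Longrightarrow> 1 \<le> x powr (- \<delta>)"
proof -
  assume x: "0 < x" "x \<le> 1"
  have "x powr \<delta> \<le> 1 powr \<delta>" using x delta_pos by (intro powr_mono2) auto
  moreover have "0 < x powr \<delta>" using x by simp
  ultimately show ?thesis by (simp add: powr_minus_divide)
qed

definition Cc where "Cc = rmin powr (- \<delta>)"

lemma Cc_pos: "0 < Cc" unfolding Cc_def using rmin by simp

lemma Cc_u: "0 < \<sigma> \<Longrightarrow> \<sigma> < 1 / rmin \<Longrightarrow> 1 \<le> Cc * \<sigma> powr (- \<delta>)"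
proof -
  assume s: "0 < \<sigma>" "\<sigma> < 1 / rmin"
  have "Cc * \<sigma> powr (- \<delta>) = (rmin * \<sigma>) powr (- \<delta>)" unfolding Cc_def by (simp add: powr_mult)
  moreover have "rmin * \<sigma> \<le> 1" using s rmin by (simp add: field_simps)
  moreover have "0 < rmin * \<sigma>" using s rmin by simp
  ultimately show ?thesis using u_ge1 by simp
qed

lemma a_ge1: "1 \<le> \<sigma> \<Longrightarrow> a \<sigma> = 1"
  unfolding a_def using prob_space.emeasure_space_1[OF P_prob] by (simp add: Nt_ge1)

lemma b_ge1: "1 \<le> \<sigma> \<Longrightarrow> b \<sigma> = 1"
  unfolding b_def using prob_space.emeasure_space_1[OF P_prob] by (simp add: Nt_ge1)

lemma enn_pmf_sum:
  assumes "\<And>S. 0 \<le> g S"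
  shows "(\<Sum>S\<in>UNIV. ennreal (pmf W S) * ennreal (g S)) = ennreal (\<Sum>S\<in>UNIV. pmf W S * g S)"
  using assms by (simp add: ennreal_mult[symmetric] sum_nonneg)

lemma delta_sum: "(\<Sum>S\<in>UNIV. pmf W S * (\<Sum>j\<in>S. c * r j powr \<delta>)) = c"
proof -
  have "(\<Sum>S\<in>UNIV. pmf W S * (\<Sum>j\<in>S. c * r j powr \<delta>)) = (\<Sum>S\<in>UNIV. c * (pmf W S * (\<Sum>j\<in>S. r j powr \<delta>)))"
    by (rule sum.cong) (auto simp: sum_distrib_left[symmetric])
  also have "\<dots> = c" using delta_eq by (simp add: sum_distrib_left[symmetric])
  finally show ?thesis .
qed

lemma a_lower: "0 < \<sigma> \<Longrightarrow> ennreal (\<sigma> powr (- \<delta>)) \<le> a \<sigma>"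
proof (induction rule: scale_induct)
  case (1 \<sigma>)
  have "\<sigma> powr (- \<delta>) \<le> 1"
  proof -
    have "1 powr \<delta> \<le> \<sigma> powr \<delta>" using 1 delta_pos by (intro powr_mono2) auto
    then show ?thesis using 1 by (simp add: powr_minus_divide)
  qed
  then show ?case using 1 by (simp add: a_ge1)
next
  case (2 \<sigma>)
  have "ennreal (\<sigma> powr (- \<delta>)) = ennreal (\<Sum>S\<in>UNIV. pmf W S * (\<Sum>j\<in>S. \<sigma> powr (- \<delta>) * r j powr \<delta>))"
    by (simp add: delta_sum)
  also have "\<dots> = (\<Sum>S\<in>UNIV. ennreal (pmf W S) * ennreal (\<Sum>j\<in>S. \<sigma> powr (- \<delta>) * r j powr \<delta>))"
    by (rule enn_pmf_sum[symmetric]) (auto intro!: sum_nonneg)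
  also have "\<dots> = (\<Sum>S\<in>UNIV. ennreal (pmf W S) * (\<Sum>j\<in>S. ennreal ((\<sigma> / r j) powr (- \<delta>))))"
    using 2 by (simp add: pw)
  also have "\<dots> \<le> (\<Sum>S\<in>UNIV. ennreal (pmf W S) * (\<Sum>j\<in>S. a (\<sigma> / r j)))"
    by (intro sum_mono mult_left_mono "2.IH") auto
  also have "\<dots> = a \<sigma>" using 2 by (simp add: a_rec)
  finally show ?case .
qed

lemma a_upper: "0 < \<sigma> \<Longrightarrow> \<sigma> < 1 / rmin \<longrightarrow> a \<sigma> \<le> ennreal (Cc * \<sigma> powr (- \<delta>))"
proof (induction rule: scale_induct)
  case (1 \<sigma>)
  show ?case using 1 Cc_u[of \<sigma>] by (simp add: a_ge1)
next
  case (2 \<sigma>)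
  have lt: "\<sigma> / r j < 1 / rmin" for j
  proof -
    have "\<sigma> / r j < 1 / r j" using 2 rj[of j] by (simp add: divide_strict_right_mono)
    also have "1 / r j \<le> 1 / rmin" using rj[of j] rmin(1) rmin(3)[of j] by (simp add: frac_le)
    finally show ?thesis .
  qed
  have "a \<sigma> = (\<Sum>S\<in>UNIV. ennreal (pmf W S) * (\<Sum>j\<in>S. a (\<sigma> / r j)))" using 2 by (simp add: a_rec)
  also have "\<dots> \<le> (\<Sum>S\<in>UNIV. ennreal (pmf W S) * (\<Sum>j\<in>S. ennreal (Cc * (\<sigma> / r j) powr (- \<delta>))))"
    using "2.IH" lt by (intro sum_mono mult_left_mono) auto
  also have "\<dots> = (\<Sum>S\<in>UNIV. ennreal (pmf W S) * ennreal (\<Sum>j\<in>S. (Cc * \<sigma> powr (- \<delta>)) * r j powr \<delta>))"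
    using 2 Cc_pos by (simp add: pw mult.assoc)
  also have "\<dots> = ennreal (\<Sum>S\<in>UNIV. pmf W S * (\<Sum>j\<in>S. (Cc * \<sigma> powr (- \<delta>)) * r j powr \<delta>))"
    by (rule enn_pmf_sum) (use Cc_pos in \<open>auto intro!: sum_nonneg\<close>)
  also have "\<dots> = ennreal (Cc * \<sigma> powr (- \<delta>))" by (simp only: delta_sum)
  finally show ?case by simp
qed


definition kap where "kap = (\<Sum>S\<in>UNIV. pmf W S * (\<Sum>i\<in>S. (r i powr \<delta>)\<^sup>2))"
definition Kc where "Kc = (\<Sum>S\<in>UNIV. pmf W S * ((real (card S))\<^sup>2 * Cc\<^sup>2))"
definition Dc where "Dc = Kc / (1 - kap) + Cc\<^sup>2"

lemma kap_lt1: "kap < 1"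
proof -
  obtain S0 where S0: "pmf W S0 > 0" "card S0 \<ge> 2" using exists_S0 by blast
  then have ne: "S0 \<noteq> {}" by auto
  have le: "(r i powr \<delta>)\<^sup>2 \<le> r i powr \<delta>" for i
    using rho_bounds[of i] by (simp add: power2_eq_square mult_le_cancel_right1 less_imp_le)
  have lt: "(r i powr \<delta>)\<^sup>2 < r i powr \<delta>" for i
    using rho_bounds[of i] by (simp add: power2_eq_square mult_less_cancel_right1)
  have "kap < (\<Sum>S\<in>UNIV. pmf W S * (\<Sum>i\<in>S. r i powr \<delta>))"
    unfolding kap_def
  proof (rule sum_strict_mono_ex1)
    show "\<forall>S\<in>UNIV. pmf W S * (\<Sum>i\<in>S. (r i powr \<delta>)\<^sup>2) \<le> pmf W S * (\<Sum>i\<in>S. r i powr \<delta>)"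
      using le by (auto intro!: mult_left_mono sum_mono)
    have "(\<Sum>i\<in>S0. (r i powr \<delta>)\<^sup>2) < (\<Sum>i\<in>S0. r i powr \<delta>)"
      using ne lt by (intro sum_strict_mono) auto
    then show "\<exists>S\<in>UNIV. pmf W S * (\<Sum>i\<in>S. (r i powr \<delta>)\<^sup>2) < pmf W S * (\<Sum>i\<in>S. r i powr \<delta>)"
      using S0 by (intro bexI[of _ S0]) auto
  qed simp
  then show ?thesis using delta_eq by simp
qed

lemma Kc_nonneg: "0 \<le> Kc" unfolding Kc_def by (intro sum_nonneg) auto

lemma Dc_ge: "Cc\<^sup>2 \<le> Dc" unfolding Dc_def using Kc_nonneg kap_lt1 by simp

lemma Dc_pos: "0 < Dc" using Dc_ge Cc_pos by (smt (verit) zero_less_power)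

lemma Dc_kap: "Dc * kap + Kc \<le> Dc"
proof -
  have "Dc * (1 - kap) = Kc + Cc\<^sup>2 * (1 - kap)" unfolding Dc_def using kap_lt1 by (simp add: field_simps)
  moreover have "0 \<le> Cc\<^sup>2 * (1 - kap)" using kap_lt1 by simp
  ultimately show ?thesis by (simp add: algebra_simps)
qed

lemma b_upper: "0 < \<sigma> \<Longrightarrow> \<sigma> < 1 / rmin \<longrightarrow> b \<sigma> \<le> ennreal (Dc * (\<sigma> powr (- \<delta>))\<^sup>2)"
proof (induction rule: scale_induct)
  case (1 \<sigma>)
  show ?case
  proof
    assume "\<sigma> < 1 / rmin"
    then have "1 \<le> Cc * \<sigma> powr (- \<delta>)" using 1 Cc_u[of \<sigma>] by simp
    then have "1 \<le> (Cc * \<sigma> powr (- \<delta>))\<^sup>2" by (simp add: one_le_power)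
    also have "\<dots> = Cc\<^sup>2 * (\<sigma> powr (- \<delta>))\<^sup>2" by (simp add: power_mult_distrib)
    also have "\<dots> \<le> Dc * (\<sigma> powr (- \<delta>))\<^sup>2" using Dc_ge by (intro mult_right_mono) auto
    finally show "b \<sigma> \<le> ennreal (Dc * (\<sigma> powr (- \<delta>))\<^sup>2)" using 1 by (simp add: b_ge1)
  qed
next
  case (2 \<sigma>)
  define u where "u = \<sigma> powr (- \<delta>)"
  define \<rho> where "\<rho> i = r i powr \<delta>" for i
  have u0: "0 \<le> u" unfolding u_def by simp
  have \<rho>b: "0 \<le> \<rho> i" "\<rho> i \<le> 1" for i unfolding \<rho>_def using rho_bounds[of i] by auto
  have lt: "\<sigma> / r j < 1 / rmin" for j
  proof -
    have "\<sigma> / r j < 1 / r j" using 2 rj[of j] by (simp add: divide_strict_right_mono)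
    also have "1 / r j \<le> 1 / rmin" using rj[of j] rmin(1) rmin(3)[of j] by (simp add: frac_le)
    finally show ?thesis .
  qed
  have pwu: "(\<sigma> / r j) powr (- \<delta>) = u * \<rho> j" for j unfolding u_def \<rho>_def using 2 by (simp add: pw)
  have aU: "a (\<sigma> / r j) \<le> ennreal (Cc * u * \<rho> j)" for j
    using a_upper[of "\<sigma> / r j"] lt[of j] pos_div[of \<sigma> j] 2 by (simp add: pwu mult.assoc)
  have bU: "b (\<sigma> / r j) \<le> ennreal (Dc * (u * \<rho> j)\<^sup>2)" for j
    using "2.IH"[of j] lt[of j] by (simp add: pwu)
  define T where "T i j = (if i = j then Dc * u\<^sup>2 * (\<rho> i)\<^sup>2 else 0) + Cc\<^sup>2 * u\<^sup>2" for i j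
  have T0: "0 \<le> T i j" for i j unfolding T_def using Dc_pos by simp
  have termb: "(if i = j then b (\<sigma> / r i) else a (\<sigma> / r i) * a (\<sigma> / r j)) \<le> ennreal (T i j)" for i j
  proof (cases "i = j")
    case True
    have "b (\<sigma> / r i) \<le> ennreal (Dc * (u * \<rho> i)\<^sup>2)" by (rule bU)
    also have "\<dots> \<le> ennreal (T i j)" unfolding T_def using True by (intro ennreal_leI) (simp add: power_mult_distrib)
    finally show ?thesis using True by simp
  next
    case False
    have "a (\<sigma> / r i) * a (\<sigma> / r j) \<le> ennreal (Cc * u * \<rho> i) * ennreal (Cc * u * \<rho> j)"
      by (intro mult_mono aU) auto
    also have "\<dots> = ennreal ((Cc * u * \<rho> i) * (Cc * u * \<rho> j))"
      using Cc_pos u0 \<rho>b by (simp add: ennreal_mult)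
    also have "\<dots> \<le> ennreal (T i j)"
    proof (intro ennreal_leI)
      have "(Cc * u * \<rho> i) * (Cc * u * \<rho> j) \<le> (Cc * u * 1) * (Cc * u * 1)"
        using Cc_pos u0 \<rho>b by (intro mult_mono mult_left_mono) auto
      then show "(Cc * u * \<rho> i) * (Cc * u * \<rho> j) \<le> T i j" unfolding T_def using False
        by (simp add: power2_eq_square mult_ac)
    qed
    finally show ?thesis using False by simp
  qed
  have sumT: "(\<Sum>i\<in>S. \<Sum>j\<in>S. T i j) = Dc * u\<^sup>2 * (\<Sum>i\<in>S. (\<rho> i)\<^sup>2) + (real (card S))\<^sup>2 * Cc\<^sup>2 * u\<^sup>2" for S :: "'a set"
  proof -
    have "(\<Sum>i\<in>S. \<Sum>j\<in>S. T i j) = (\<Sum>i\<in>S. Dc * u\<^sup>2 * (\<rho> i)\<^sup>2 + real (card S) * (Cc\<^sup>2 * u\<^sup>2))"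
      unfolding T_def by (rule sum.cong) (auto simp: sum.distrib sum.delta)
    also have "\<dots> = Dc * u\<^sup>2 * (\<Sum>i\<in>S. (\<rho> i)\<^sup>2) + (real (card S))\<^sup>2 * Cc\<^sup>2 * u\<^sup>2"
      by (simp add: sum.distrib sum_distrib_left power2_eq_square)
    finally show ?thesis .
  qed
  have "b \<sigma> = (\<Sum>S\<in>UNIV. ennreal (pmf W S) *
      (\<Sum>i\<in>S. \<Sum>j\<in>S. if i = j then b (\<sigma> / r i) else a (\<sigma> / r i) * a (\<sigma> / r j)))"
    using 2 by (simp add: b_rec)
  also have "\<dots> \<le> (\<Sum>S\<in>UNIV. ennreal (pmf W S) * (\<Sum>i\<in>S. \<Sum>j\<in>S. ennreal (T i j)))"
    by (intro sum_mono mult_left_mono termb) auto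
  also have "\<dots> = (\<Sum>S\<in>UNIV. ennreal (pmf W S) * ennreal (\<Sum>i\<in>S. \<Sum>j\<in>S. T i j))"
    using T0 by (simp add: sum_nonneg)
  also have "\<dots> = ennreal (\<Sum>S\<in>UNIV. pmf W S * (\<Sum>i\<in>S. \<Sum>j\<in>S. T i j))"
    by (rule enn_pmf_sum) (use T0 in \<open>auto intro!: sum_nonneg\<close>)
  also have "(\<Sum>S\<in>UNIV. pmf W S * (\<Sum>i\<in>S. \<Sum>j\<in>S. T i j)) = u\<^sup>2 * (Dc * kap + Kc)"
  proof -
    have "(\<Sum>S\<in>UNIV. pmf W S * (\<Sum>i\<in>S. \<Sum>j\<in>S. T i j))
        = (\<Sum>S\<in>UNIV. (Dc * u\<^sup>2) * (pmf W S * (\<Sum>i\<in>S. (\<rho> i)\<^sup>2)) + u\<^sup>2 * (pmf W S * ((real (card S))\<^sup>2 * Cc\<^sup>2)))"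
      by (rule sum.cong) (auto simp: sumT algebra_simps)
    also have "\<dots> = (Dc * u\<^sup>2) * kap + u\<^sup>2 * Kc"
      unfolding kap_def Kc_def \<rho>_def by (simp add: sum.distrib sum_distrib_left)
    finally show ?thesis by (simp add: algebra_simps)
  qed
  also have "ennreal (u\<^sup>2 * (Dc * kap + Kc)) \<le> ennreal (Dc * u\<^sup>2)"
  proof (intro ennreal_leI)
    have "u\<^sup>2 * (Dc * kap + Kc) \<le> u\<^sup>2 * Dc" using Dc_kap by (intro mult_left_mono) auto
    then show "u\<^sup>2 * (Dc * kap + Kc) \<le> Dc * u\<^sup>2" by (simp add: mult.commute)
  qed
  finally show ?case by (simp add: u_def)
qed


definition good :: "real \<Rightarrow> ('a list \<Rightarrow> 'a set) \<Rightarrow> bool" where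
  "good \<sigma> \<omega> \<longleftrightarrow> \<sigma> powr (- \<delta>) / 2 < Nt \<sigma> \<omega>"

lemma good_sets: "0 < \<sigma> \<Longrightarrow> {\<omega>. good \<sigma> \<omega>} \<in> sets P"
proof -
  assume s: "0 < \<sigma>"
  note Nt_meas[OF s, measurable]
  have "{\<omega> \<in> space P. \<sigma> powr (- \<delta>) / 2 < Nt \<sigma> \<omega>} \<in> sets P" by measurable
  then show ?thesis by (simp add: good_def)
qed

lemma PZ:
  assumes s: "0 < \<sigma>" "\<sigma> < 1"
  shows "1 / (4 * Dc) \<le> measure P {\<omega>. good \<sigma> \<omega>}"
proof -
  interpret prob_space P by (rule P_prob)
  define a0 where "a0 = \<sigma> powr (- \<delta>)"
  define A where "A = {\<omega>. good \<sigma> \<omega>}"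
  define l where "l = 1 / (2 * Dc * a0)"
  have a0: "0 < a0" unfolding a0_def using s by simp
  have l: "0 < l" unfolding l_def using a0 Dc_pos by simp
  have As: "A \<in> sets P" unfolding A_def using good_sets[OF s(1)] .
  have pt: "ennreal (Nt \<sigma> \<omega>) \<le> ennreal (a0 / 2) + ennreal (l / 2) * ennreal ((Nt \<sigma> \<omega>)\<^sup>2) + ennreal (1 / (2 * l)) * indicator A \<omega>" for \<omega>
  proof (cases "\<omega> \<in> A")
    case True
    define x where "x = Nt \<sigma> \<omega>"
    have "0 \<le> (l * x - 1)\<^sup>2" by simp
    then have "0 \<le> l * (l * x\<^sup>2 - 2 * x) + 1" by (simp add: power2_eq_square algebra_simps)
    then have "0 \<le> (l * (l * x\<^sup>2 - 2 * x) + 1) / (2 * l)" using l by simp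
    also have "(l * (l * x\<^sup>2 - 2 * x) + 1) / (2 * l) = l / 2 * x\<^sup>2 + 1 / (2 * l) - x"
      using l by (simp add: field_simps power2_eq_square)
    finally have "x \<le> a0 / 2 + l / 2 * x\<^sup>2 + 1 / (2 * l)" using a0 by simp
    then have "ennreal x \<le> ennreal (a0 / 2 + l / 2 * x\<^sup>2 + 1 / (2 * l))" by (rule ennreal_leI)
    also have "\<dots> = ennreal (a0 / 2) + ennreal (l / 2) * ennreal (x\<^sup>2) + ennreal (1 / (2 * l))"
      using a0 l by (simp add: ennreal_plus[symmetric] ennreal_mult[symmetric] del: ennreal_plus)
    finally show ?thesis using True by (simp add: x_def)
  next
    case False
    then have "Nt \<sigma> \<omega> \<le> a0 / 2" unfolding A_def good_def a0_def by simp
    then have "ennreal (Nt \<sigma> \<omega>) \<le> ennreal (a0 / 2)" by (rule ennreal_leI)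
    then show ?thesis using False by (simp add: add_increasing2)
  qed
  have m1: "(\<lambda>\<omega>. ennreal ((Nt \<sigma> \<omega>)\<^sup>2)) \<in> borel_measurable P" by (rule Nt2_enn_meas[OF s(1)])
  have "ennreal a0 \<le> a \<sigma>" unfolding a0_def by (rule a_lower[OF s(1)])
  also have "a \<sigma> \<le> (\<integral>\<^sup>+\<omega>. ennreal (a0 / 2) + ennreal (l / 2) * ennreal ((Nt \<sigma> \<omega>)\<^sup>2) + ennreal (1 / (2 * l)) * indicator A \<omega> \<partial>P)"
    unfolding a_def by (intro nn_integral_mono pt)
  also have "\<dots> = ennreal (a0 / 2) + ennreal (l / 2) * b \<sigma> + ennreal (1 / (2 * l)) * emeasure P A"
    unfolding b_def using m1 As
    by (simp add: nn_integral_add nn_integral_cmult emeasure_space_1 borel_measurable_times_ennreal borel_measurable_add)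
  also have "\<dots> \<le> ennreal (a0 / 2) + ennreal (l / 2) * ennreal (Dc * a0\<^sup>2) + ennreal (1 / (2 * l)) * ennreal (measure P A)"
  proof -
    have "1 \<le> 1 / rmin" using rmin by simp
    then have "\<sigma> < 1 / rmin" using s by linarith
    then have "b \<sigma> \<le> ennreal (Dc * a0\<^sup>2)" using b_upper[OF s(1)] unfolding a0_def by simp
    then show ?thesis by (intro add_mono mult_left_mono order_refl) (auto simp: emeasure_eq_measure)
  qed
  also have "\<dots> = ennreal (a0 / 2 + l / 2 * (Dc * a0\<^sup>2) + 1 / (2 * l) * measure P A)"
    using a0 l Dc_pos by (simp add: ennreal_plus[symmetric] ennreal_mult[symmetric] del: ennreal_plus)
  finally have "a0 \<le> a0 / 2 + l / 2 * (Dc * a0\<^sup>2) + 1 / (2 * l) * measure P A"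
    using a0 l Dc_pos by (subst (asm) ennreal_le_iff) (auto intro!: add_nonneg_nonneg)
  moreover have "l / 2 * (Dc * a0\<^sup>2) = a0 / 4" unfolding l_def using a0 Dc_pos by (simp add: field_simps power2_eq_square)
  moreover have "1 / (2 * l) = Dc * a0" unfolding l_def using a0 Dc_pos by (simp add: field_simps)
  ultimately have "a0 / 4 \<le> Dc * a0 * measure P A" by simp
  then have "a0 * (1 / (4 * Dc)) \<le> a0 * measure P A" using Dc_pos by (simp add: field_simps)
  then show ?thesis unfolding A_def using a0 by (simp only: mult_le_cancel_left_pos)
qed


lemma prod_ind: "finite S \<Longrightarrow> (\<Prod>j\<in>S. indicator (E j) (f j) :: ennreal) = (if \<forall>j\<in>S. f j \<in> E j then 1 else 0)"
  by (induction S rule: finite_induct) auto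

lemma event_branch:
  assumes E: "\<And>j. E j \<in> sets P"
  shows "{\<omega>. \<forall>j\<in>\<omega> []. shift j \<omega> \<in> E j} \<in> sets P"
    and "measure P {\<omega>. \<forall>j\<in>\<omega> []. shift j \<omega> \<in> E j} = (\<Sum>S\<in>UNIV. pmf W S * (\<Prod>j\<in>S. measure P (E j)))"
proof -
  interpret prob_space P by (rule P_prob)
  define G where "G S ws = (\<Prod>j\<in>S. indicator (E j) (ws j) :: ennreal)" for S and ws :: "'a \<Rightarrow> 'a list \<Rightarrow> 'a set"
  have Gm: "G S \<in> borel_measurable (Qm W)" for S
    unfolding G_def by (intro borel_measurable_prod_ennreal meas_Qm_comp borel_measurable_indicator E)
  define B where "B = {\<omega>. \<forall>j\<in>\<omega> []. shift j \<omega> \<in> E j}"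
  have ind: "indicator B \<omega> = G (\<omega> []) (\<lambda>j. shift j \<omega>)" for \<omega>
    unfolding G_def B_def by (simp add: prod_ind indicator_def)
  have "indicator B = (\<lambda>\<omega>. G (\<omega> []) (\<lambda>j. shift j \<omega>))" by (rule ext) (rule ind)
  then have "(indicator B :: _ \<Rightarrow> ennreal) \<in> borel_measurable P"
    using nn_branch(2)[of G, OF Gm] by simp
  then have Bs: "B \<in> sets P" using borel_measurable_indicator_iff[of B P, where 'x=ennreal] by simp
  then show "{\<omega>. \<forall>j\<in>\<omega> []. shift j \<omega> \<in> E j} \<in> sets P" unfolding B_def .
  have "emeasure P B = (\<integral>\<^sup>+\<omega>. G (\<omega> []) (\<lambda>j. shift j \<omega>) \<partial>P)"
    using Bs by (simp add: ind[symmetric])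
  also have "\<dots> = (\<Sum>S\<in>UNIV. ennreal (pmf W S) * (\<integral>\<^sup>+ws. G S ws \<partial>Qm W))"
    by (rule nn_branch(1)[OF Gm])
  also have "\<dots> = (\<Sum>S\<in>UNIV. ennreal (pmf W S) * ennreal (\<Prod>j\<in>S. measure P (E j)))"
  proof (rule sum.cong[OF refl])
    fix S
    have "(\<integral>\<^sup>+ws. G S ws \<partial>Qm W) = (\<Prod>j\<in>S. \<integral>\<^sup>+\<omega>. indicator (E j) \<omega> \<partial>P)"
      unfolding G_def by (rule Qm_prod) (intro borel_measurable_indicator E)
    also have "\<dots> = (\<Prod>j\<in>S. ennreal (measure P (E j)))"
      using E by (simp add: emeasure_eq_measure)
    also have "\<dots> = ennreal (\<Prod>j\<in>S. measure P (E j))" by (simp add: prod_ennreal)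
    finally show "ennreal (pmf W S) * (\<integral>\<^sup>+ws. G S ws \<partial>Qm W) = ennreal (pmf W S) * ennreal (\<Prod>j\<in>S. measure P (E j))"
      by simp
  qed
  also have "\<dots> = ennreal (\<Sum>S\<in>UNIV. pmf W S * (\<Prod>j\<in>S. measure P (E j)))"
    by (rule enn_pmf_sum) (auto intro!: prod_nonneg)
  finally have "ennreal (measure P B) = ennreal (\<Sum>S\<in>UNIV. pmf W S * (\<Prod>j\<in>S. measure P (E j)))"
    by (simp add: emeasure_eq_measure)
  then show "measure P {\<omega>. \<forall>j\<in>\<omega> []. shift j \<omega> \<in> E j} = (\<Sum>S\<in>UNIV. pmf W S * (\<Prod>j\<in>S. measure P (E j)))"
    unfolding B_def by (subst (asm) ennreal_inj) (auto intro!: sum_nonneg prod_nonneg mult_nonneg_nonneg)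
qed

fun AB :: "nat \<Rightarrow> real \<Rightarrow> ('a list \<Rightarrow> 'a set) \<Rightarrow> bool" where
  "AB 0 \<rho> \<omega> = (\<not> good \<rho> \<omega>)"
| "AB (Suc n) \<rho> \<omega> = (\<forall>j\<in>\<omega> []. AB n (\<rho> / r j) (shift j \<omega>))"

lemma AB_sets: "0 < \<rho> \<Longrightarrow> {\<omega>. AB n \<rho> \<omega>} \<in> sets P"
proof (induction n arbitrary: \<rho>)
  case 0
  have "{\<omega>. AB 0 \<rho> \<omega>} = space P - {\<omega>. good \<rho> \<omega>}" by auto
  then show ?case using sets.compl_sets[OF good_sets[OF 0]] by simp
next
  case (Suc n)
  have "{\<omega>. AB (Suc n) \<rho> \<omega>} = {\<omega>. \<forall>j\<in>\<omega> []. shift j \<omega> \<in> {\<omega>. AB n (\<rho> / r j) \<omega>}}" by simp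
  also have "\<dots> \<in> sets P" by (rule event_branch(1)) (intro Suc.IH pos_div Suc.prems)
  finally show ?case .
qed

definition s0 where "s0 = 1 - 1 / (4 * Dc)"

lemma AB_prob: "0 < \<rho> \<Longrightarrow> \<rho> < rmin ^ n \<Longrightarrow> measure P {\<omega>. AB n \<rho> \<omega>} \<le> (F ^^ n) s0"
proof (induction n arbitrary: \<rho>)
  case 0
  interpret prob_space P by (rule P_prob)
  have "{\<omega>. AB 0 \<rho> \<omega>} = space P - {\<omega>. good \<rho> \<omega>}" by auto
  then have "measure P {\<omega>. AB 0 \<rho> \<omega>} = 1 - measure P {\<omega>. good \<rho> \<omega>}"
    using prob_compl[OF good_sets[OF "0.prems"(1)]] by simp
  also have "\<dots> \<le> s0" unfolding s0_def using PZ[of \<rho>] 0 by simp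
  finally show ?case by simp
next
  case (Suc n)
  have lt: "\<rho> / r j < rmin ^ n" for j
  proof -
    have "\<rho> < rmin * rmin ^ n" using Suc.prems by simp
    also have "\<dots> \<le> r j * rmin ^ n" using rmin(3)[of j] rmin(1) by (intro mult_right_mono) auto
    finally show ?thesis using rj[of j] by (simp add: field_simps)
  qed
  have "{\<omega>. AB (Suc n) \<rho> \<omega>} = {\<omega>. \<forall>j\<in>\<omega> []. shift j \<omega> \<in> {\<omega>. AB n (\<rho> / r j) \<omega>}}" by simp
  then have "measure P {\<omega>. AB (Suc n) \<rho> \<omega>} = (\<Sum>S\<in>UNIV. pmf W S * (\<Prod>j\<in>S. measure P {\<omega>. AB n (\<rho> / r j) \<omega>}))"
    using event_branch(2)[of "\<lambda>j. {\<omega>. AB n (\<rho> / r j) \<omega>}"] AB_sets pos_div Suc.prems by simp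
  also have "\<dots> \<le> (\<Sum>S\<in>UNIV. pmf W S * (\<Prod>j\<in>S. (F ^^ n) s0))"
    using Suc.IH pos_div Suc.prems lt
    by (intro sum_mono mult_left_mono prod_mono) auto
  also have "\<dots> = F ((F ^^ n) s0)" unfolding F_def by simp
  finally show ?case by simp
qed

definition Ge :: "nat \<Rightarrow> ('a list \<Rightarrow> 'a set) set" where "Ge n = {\<omega>. gw_gen \<omega> n = {}}"

lemma Ge_sets_prob: "Ge n \<in> sets P \<and> measure P (Ge n) = (F ^^ n) 0"
proof (induction n)
  case 0 then show ?case by (simp add: Ge_def)
next
  case (Suc n)
  have eq: "Ge (Suc n) = {\<omega>. \<forall>j\<in>\<omega> []. shift j \<omega> \<in> Ge n}"
    unfolding Ge_def by (intro Collect_cong) (simp only: gen_Suc_empty mem_Collect_eq)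
  have "Ge (Suc n) \<in> sets P" unfolding eq by (rule event_branch(1)) (use Suc in auto)
  moreover have "measure P (Ge (Suc n)) = (\<Sum>S\<in>UNIV. pmf W S * (\<Prod>j\<in>S. measure P (Ge n)))"
    unfolding eq by (rule event_branch(2)) (use Suc in auto)
  moreover have "\<dots> = F ((F ^^ n) 0)" using Suc by (simp add: F_def[of "(F ^^ n) 0"])
  moreover have "(F ^^ Suc n) 0 = F ((F ^^ n) 0)" by simp
  ultimately show ?case by simp
qed

lemma Ge_AB: "gw_gen \<omega> n = {} \<Longrightarrow> AB n \<rho> \<omega>"
proof (induction n arbitrary: \<rho> \<omega>)
  case 0 then show ?case by simp
next
  case (Suc n)
  have "\<forall>j\<in>\<omega> []. gw_gen (shift j \<omega>) n = {}" using Suc.prems gen_Suc_empty by blast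
  then show ?case using Suc.IH by simp
qed

definition theta where "theta = rmin powr \<delta>"

lemma theta: "0 < theta" "theta \<le> r j powr \<delta>" "theta \<le> 1"
proof -
  show "0 < theta" unfolding theta_def using rmin by simp
  show "theta \<le> r j powr \<delta>" unfolding theta_def using rmin(1) rmin(3)[of j] delta_pos by (intro powr_mono2) auto
  then show "theta \<le> 1" using rho_bounds[of j] by simp
qed

lemma notAB_big: "0 < \<rho> \<Longrightarrow> \<not> AB n \<rho> \<omega> \<Longrightarrow> \<rho> powr (- \<delta>) * theta ^ n / 2 < Nt \<rho> \<omega>"
proof (induction n arbitrary: \<rho> \<omega>)
  case 0 then show ?case by (simp add: good_def)
next
  case (Suc n)
  from Suc.prems obtain j where j: "j \<in> \<omega> []" "\<not> AB n (\<rho> / r j) (shift j \<omega>)" by auto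
  have IH: "(\<rho> / r j) powr (- \<delta>) * theta ^ n / 2 < Nt (\<rho> / r j) (shift j \<omega>)"
    using Suc.IH[OF pos_div[OF Suc.prems(1)] j(2)] .
  have "\<rho> powr (- \<delta>) * theta ^ Suc n / 2 = (\<rho> powr (- \<delta>) * theta) * theta ^ n / 2" by simp
  also have "\<dots> \<le> (\<rho> powr (- \<delta>) * r j powr \<delta>) * theta ^ n / 2"
    using theta(1) theta(2)[of j] by (intro divide_right_mono mult_right_mono mult_left_mono) auto
  also have "\<dots> = (\<rho> / r j) powr (- \<delta>) * theta ^ n / 2" using pw[OF Suc.prems(1)] by simp
  also have "\<dots> < Nt (\<rho> / r j) (shift j \<omega>)" by (rule IH)
  finally have lt: "\<rho> powr (- \<delta>) * theta ^ Suc n / 2 < Nt (\<rho> / r j) (shift j \<omega>)" .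
  show ?case
  proof (cases "\<rho> < 1")
    case True
    have fin: "finite (\<omega> [])" by simp
    have "Nt (\<rho> / r j) (shift j \<omega>) \<le> (\<Sum>j'\<in>\<omega> []. Nt (\<rho> / r j') (shift j' \<omega>))"
      by (rule member_le_sum[OF j(1)]) (auto simp: Nt_nonneg)
    then show ?thesis using lt Nt_rec[OF Suc.prems(1) True] by simp
  next
    case False
    have "\<rho> powr (- \<delta>) \<le> 1"
    proof -
      have "1 powr \<delta> \<le> \<rho> powr \<delta>" using False delta_pos by (intro powr_mono2) auto
      then show ?thesis using False by (simp add: powr_minus_divide)
    qed
    moreover have "theta ^ Suc n \<le> 1" using theta(1) theta(3) by (intro power_le_one) auto
    ultimately have "\<rho> powr (- \<delta>) * theta ^ Suc n \<le> 1"
      using theta(1) by (simp add: mult_le_one)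
    then show ?thesis using False Nt_ge1[of \<rho> \<omega>] by simp
  qed
qed


lemma main:
  assumes al: "\<alpha> < \<delta>" and ep: "\<epsilon> > 0"
  shows "\<exists>\<rho>0>0. \<forall>\<rho>. 0 < \<rho> \<and> \<rho> < \<rho>0 \<longrightarrow>
     measure P {\<omega>. real (card (gw_tree \<omega> \<inter> cut_set r \<rho>)) > \<rho> powr (-\<alpha>) \<and> nonextinct \<omega>}
     / measure P {\<omega>. nonextinct \<omega>} > 1 - \<epsilon>"
proof -
  interpret prob_space P by (rule P_prob)
  define Sv where "Sv = {\<omega> :: 'a list \<Rightarrow> 'a set. nonextinct \<omega>}"
  have Ges: "Ge n \<in> sets P" for n using Ge_sets_prob by blast
  have Sv_eq: "Sv = space P - (\<Union>n. Ge n)" by (auto simp: Sv_def Ge_def nonextinct_def)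
  have U: "(\<Union>n. Ge n) \<in> sets P" using Ges by (intro sets.countable_UN) auto
  have Svs: "Sv \<in> sets P" unfolding Sv_eq using U by (rule sets.compl_sets)
  have inc: "incseq Ge"
  proof (rule incseq_SucI)
    fix n show "Ge n \<subseteq> Ge (Suc n)" unfolding Ge_def using gen_empty_mono[of _ n "Suc n"] by auto
  qed
  have l1: "(\<lambda>n. measure P (Ge n)) \<longlonglongrightarrow> measure P (\<Union>n. Ge n)"
    by (rule finite_Lim_measure_incseq) (use Ges inc in auto)
  have l2: "(\<lambda>n. measure P (Ge n)) \<longlonglongrightarrow> eta"
    using iter_conv[of 0] Ge_sets_prob by simp
  have mU: "measure P (\<Union>n. Ge n) = eta" using LIMSEQ_unique[OF l1 l2] .
  have PS: "measure P Sv = 1 - eta"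
    unfolding Sv_eq using prob_compl[of "\<Union>n. Ge n"] Ges mU by auto
  have PSpos: "0 < measure P Sv" using PS eta by simp
  have s0: "0 \<le> s0" "s0 < 1"
  proof -
    have "1 / (4 * Dc) \<le> measure P {\<omega>. good (1/2) \<omega>}" by (rule PZ) auto
    also have "\<dots> \<le> 1" by simp
    finally show "0 \<le> s0" unfolding s0_def by simp
    show "s0 < 1" unfolding s0_def using Dc_pos by simp
  qed
  have dl: "(\<lambda>n. (F ^^ n) s0 - (F ^^ n) 0) \<longlonglongrightarrow> eta - eta"
    by (intro tendsto_diff iter_conv) (use s0 in auto)
  then have dl0: "(\<lambda>n. (F ^^ n) s0 - (F ^^ n) 0) \<longlonglongrightarrow> 0" by simp
  have epos: "0 < \<epsilon> * measure P Sv" using ep PSpos by simp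
  obtain N where N: "\<forall>n\<ge>N. norm (((F ^^ n) s0 - (F ^^ n) 0) - 0) < \<epsilon> * measure P Sv"
    using LIMSEQ_D[OF dl0 epos] by blast
  define n where "n = N"
  have dn: "(F ^^ n) s0 - (F ^^ n) 0 < \<epsilon> * measure P Sv"
    using N[rule_format, of n] unfolding n_def by simp
  define c where "c = theta ^ n / 2"
  have c: "0 < c" unfolding c_def using theta(1) by simp
  define \<rho>1 where "\<rho>1 = c powr (1 / (\<delta> - \<alpha>))"
  have \<rho>1: "0 < \<rho>1" unfolding \<rho>1_def using c by simp
  have \<rho>1c: "\<rho>1 powr (\<delta> - \<alpha>) = c" unfolding \<rho>1_def using al c by (simp add: powr_powr)
  define \<rho>0 where "\<rho>0 = min (rmin ^ n) \<rho>1"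
  have \<rho>0: "0 < \<rho>0" unfolding \<rho>0_def using \<rho>1 rmin by simp
  show ?thesis
  proof (intro exI[of _ \<rho>0] conjI allI impI \<rho>0)
    fix \<rho> assume \<rho>: "0 < \<rho> \<and> \<rho> < \<rho>0"
    then have \<rho>n: "\<rho> < rmin ^ n" and \<rho>r1: "\<rho> < \<rho>1" unfolding \<rho>0_def by auto
    have "rmin ^ n \<le> 1" using rmin by (intro power_le_one) auto
    then have \<rho>lt1: "\<rho> < 1" using \<rho>n by simp
    have key: "\<rho> powr (- \<alpha>) \<le> \<rho> powr (- \<delta>) * theta ^ n / 2"
    proof -
      have d: "0 \<le> \<delta> - \<alpha>" using al by simp
      have r0: "0 \<le> \<rho>" using \<rho> by simp
      have rl: "\<rho> \<le> \<rho>1" using \<rho>r1 by simp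
      have le0: "\<rho> powr (\<delta> - \<alpha>) \<le> \<rho>1 powr (\<delta> - \<alpha>)" using powr_mono2[OF d r0 rl] .
      have le: "\<rho> powr (\<delta> - \<alpha>) \<le> c" using le0 unfolding \<rho>1c .
      have eqp: "\<rho> powr (- \<delta>) * \<rho> powr (\<delta> - \<alpha>) = \<rho> powr (- \<alpha>)"
        using powr_add[of \<rho> "- \<delta>" "\<delta> - \<alpha>"] by simp
      have m: "\<rho> powr (- \<delta>) * \<rho> powr (\<delta> - \<alpha>) \<le> \<rho> powr (- \<delta>) * c"
        using le by (rule mult_left_mono) simp
      have "\<rho> powr (- \<alpha>) \<le> \<rho> powr (- \<delta>) * c" using m unfolding eqp .
      then show ?thesis unfolding c_def by simp
    qed
    have Ceq: "Cset r \<rho> = cut_set r \<rho>" using \<rho>lt1 by (simp add: Cset_def)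
    define Big where "Big = {\<omega>. \<rho> powr (- \<alpha>) < Nt \<rho> \<omega> \<and> nonextinct \<omega>}"
    have Bigeq: "{\<omega>. real (card (gw_tree \<omega> \<inter> cut_set r \<rho>)) > \<rho> powr (-\<alpha>) \<and> nonextinct \<omega>} = Big"
      unfolding Big_def Nt_def Ceq by simp
    have Bigs: "Big \<in> sets P"
    proof -
      have r0: "0 < \<rho>" using \<rho> by simp
      have o: "{\<rho> powr (- \<alpha>)<..} \<in> sets borel" by simp
      have V: "Nt \<rho> -` {\<rho> powr (- \<alpha>)<..} \<inter> space P \<in> sets P"
        by (rule measurable_sets[OF Nt_meas[OF r0] o])
      have "Big = (Nt \<rho> -` {\<rho> powr (- \<alpha>)<..} \<inter> space P) \<inter> Sv"
        unfolding Big_def Sv_def by auto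
      then show ?thesis using V Svs by (simp add: sets.Int)
    qed
    have BigSv: "Big \<subseteq> Sv" unfolding Big_def Sv_def by auto
    have ABs: "{\<omega>. AB n \<rho> \<omega>} \<in> sets P" by (rule AB_sets) (use \<rho> in simp)
    have GeAB: "Ge n \<subseteq> {\<omega>. AB n \<rho> \<omega>}"
    proof
      fix \<omega> assume "\<omega> \<in> Ge n"
      then have "gw_gen \<omega> n = {}" by (simp add: Ge_def)
      then show "\<omega> \<in> {\<omega>. AB n \<rho> \<omega>}" using Ge_AB by simp
    qed
    have sub: "Sv - Big \<subseteq> {\<omega>. AB n \<rho> \<omega>} - Ge n"
    proof
      fix \<omega> assume w: "\<omega> \<in> Sv - Big"
      then have ne: "nonextinct \<omega>" "\<not> \<rho> powr (- \<alpha>) < Nt \<rho> \<omega>" unfolding Sv_def Big_def by auto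
      have "AB n \<rho> \<omega>"
      proof (rule ccontr)
        assume "\<not> AB n \<rho> \<omega>"
        moreover have "0 < \<rho>" using \<rho> by simp
        ultimately have "\<rho> powr (- \<delta>) * theta ^ n / 2 < Nt \<rho> \<omega>" using notAB_big by blast
        then show False using key ne(2) by linarith
      qed
      moreover have "\<omega> \<notin> Ge n" using ne(1) unfolding Ge_def nonextinct_def by auto
      ultimately show "\<omega> \<in> {\<omega>. AB n \<rho> \<omega>} - Ge n" by simp
    qed
    have "measure P (Sv - Big) \<le> measure P ({\<omega>. AB n \<rho> \<omega>} - Ge n)"
      by (rule finite_measure_mono[OF sub]) (use ABs Ges in auto)
    also have "\<dots> = measure P {\<omega>. AB n \<rho> \<omega>} - measure P (Ge n)"
      by (rule finite_measure_Diff[OF ABs Ges GeAB])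
    also have "\<dots> \<le> (F ^^ n) s0 - (F ^^ n) 0"
      using AB_prob[of \<rho> n] \<rho> \<rho>n Ge_sets_prob[of n] by simp
    also have "\<dots> < \<epsilon> * measure P Sv" by (rule dn)
    finally have small: "measure P (Sv - Big) < \<epsilon> * measure P Sv" .
    have "measure P (Sv - Big) = measure P Sv - measure P Big"
      by (rule finite_measure_Diff[OF Svs Bigs BigSv])
    moreover have "(1 - \<epsilon>) * measure P Sv = measure P Sv - \<epsilon> * measure P Sv" by (simp add: algebra_simps)
    ultimately have "(1 - \<epsilon>) * measure P Sv < measure P Big" using small by linarith
    then have "1 - \<epsilon> < measure P Big / measure P Sv" using PSpos by (simp add: less_divide_eq)
    then show "measure P {\<omega>. real (card (gw_tree \<omega> \<inter> cut_set r \<rho>)) > \<rho> powr (-\<alpha>) \<and> nonextinct \<omega>}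
     / measure P {\<omega>. nonextinct \<omega>} > 1 - \<epsilon>"
      unfolding Bigeq Sv_def[symmetric] .
  qed
qed

end


theorem corollary5p5:
  fixes W :: "('a::finite) set pmf" and r :: "'a \<Rightarrow> real" and \<delta> :: real
  assumes r_range: "\<And>i. 0 < r i \<and> r i < 1"
    and W_pos: "\<And>i. measure_pmf.prob W {S. i \<in> S} > 0"
    and supercritical: "measure_pmf.expectation W (\<lambda>S. real (card S)) > 1"
    and delta: "measure_pmf.expectation W (\<lambda>S. \<Sum>i\<in>S. r i powr \<delta>) = 1"
  shows "\<forall>\<alpha> < \<delta>. \<forall>\<epsilon> > 0. \<exists>\<rho>0 > 0. \<forall>\<rho>. 0 < \<rho> \<and> \<rho> < \<rho>0 \<longrightarrow>
     prob_space.prob (gw_space W)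
        {\<omega> \<in> space (gw_space W). real (card (gw_tree \<omega> \<inter> cut_set r \<rho>)) > \<rho> powr (-\<alpha>) \<and> nonextinct \<omega>}
     / prob_space.prob (gw_space W) {\<omega> \<in> space (gw_space W). nonextinct \<omega>}
     > 1 - \<epsilon>"
proof -
  have e1: "measure_pmf.expectation W (\<lambda>S. real (card S)) = (\<Sum>S\<in>UNIV. pmf W S * real (card S))"
    by (subst integral_measure_pmf_real[where A=UNIV]) (auto simp: mult.commute)
  have e2: "measure_pmf.expectation W (\<lambda>S. \<Sum>i\<in>S. r i powr \<delta>) = (\<Sum>S\<in>UNIV. pmf W S * (\<Sum>i\<in>S. r i powr \<delta>))"
    by (subst integral_measure_pmf_real[where A=UNIV]) (auto simp: mult.commute)
  interpret G: gwl W r \<delta>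
  proof
    show "\<And>i. 0 < r i \<and> r i < 1" by (rule r_range)
    show "1 < (\<Sum>S\<in>UNIV. pmf W S * real (card S))" using supercritical e1 by simp
    show "(\<Sum>S\<in>UNIV. pmf W S * (\<Sum>i\<in>S. r i powr \<delta>)) = 1" using delta e2 by simp
  qed
  show ?thesis
  proof (intro allI impI)
    fix \<alpha> \<epsilon> :: real
    assume a: "\<alpha> < \<delta>" and e: "\<epsilon> > 0"
    show "\<exists>\<rho>0 > 0. \<forall>\<rho>. 0 < \<rho> \<and> \<rho> < \<rho>0 \<longrightarrow>
     prob_space.prob (gw_space W)
        {\<omega> \<in> space (gw_space W). real (card (gw_tree \<omega> \<inter> cut_set r \<rho>)) > \<rho> powr (-\<alpha>) \<and> nonextinct \<omega>}
     / prob_space.prob (gw_space W) {\<omega> \<in> space (gw_space W). nonextinct \<omega>}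
     > 1 - \<epsilon>"
      using G.main[OF a e] by simp
  qed
qed

end
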